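(* Let $d>2$ be an integer and let $$\mathbb{E}=\bigcup\left\{\kappa_{p-1}+\frac{p}{d},\ \kappa_p-\frac{p}{d}\right\},$$ the union over all positive integers $p$ of which $d$ is a proper divisor (that is, $d$ divides $p$ and $d\neq p$). Then $$\lim_{k\to\infty}\frac{|\mathbb{E}\cap[1,k]|}{k^{1/(d+1)}}=\frac{\left[4(d+1)!\,\zeta(d)\right]^{1/(d+1)}}{d},$$ where $\zeta$ is the Riemann zeta function.
   Context: A point of $\mathbb{Z}^d$ is primitive if its coordinates are relatively prime; $\mathbb{P}^d_\circ$ denotes the set of primitive points of $\mathbb{Z}^d$ whose first non-zero coordinate is positive. For a finite $\mathcal{X}\subset\mathbb{R}^d$, $\kappa(\mathcal{X})=\max_{1\le i\le d}\sum_{x\in\mathcal{X}}|x_i|$. $B(d,p)=\{x\in\mathbb{R}^d:\|x\|_1\le p\}$ and $\kappa_p=\kappa(B(d,p)\cap\mathbb{P}^d_\circ)$. *)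

theory Defs
  imports "HOL-Analysis.Analysis"
begin

text \<open>Points of Z^d are encoded as functions nat => int vanishing outside {0..<d}
  (coordinate i+1 of the paper is x i).\<close>

definition lattice_pts :: "nat \<Rightarrow> (nat \<Rightarrow> int) set" where
  "lattice_pts d = {x. \<forall>i\<ge>d. x i = 0}"

definition primitive :: "nat \<Rightarrow> (nat \<Rightarrow> int) \<Rightarrow> bool" where
  "primitive d x \<longleftrightarrow> x \<in> lattice_pts d \<and> Gcd (x ` {..<d}) = 1"

definition prim_pos :: "nat \<Rightarrow> (nat \<Rightarrow> int) set" where
  "prim_pos d = {x. primitive d x \<and> (\<exists>i<d. x i > 0 \<and> (\<forall>j<i. x j = 0))}"

definition l1norm :: "nat \<Rightarrow> (nat \<Rightarrow> int) \<Rightarrow> int" where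
  "l1norm d x = (\<Sum>i<d. \<bar>x i\<bar>)"

definition ball1 :: "nat \<Rightarrow> nat \<Rightarrow> (nat \<Rightarrow> int) set" where
  "ball1 d p = {x \<in> lattice_pts d. l1norm d x \<le> int p}"

definition kappa_set :: "nat \<Rightarrow> (nat \<Rightarrow> int) set \<Rightarrow> int" where
  "kappa_set d X = Max ((\<lambda>i. \<Sum>x\<in>X. \<bar>x i\<bar>) ` {..<d})"

definition kappa :: "nat \<Rightarrow> nat \<Rightarrow> int" where
  "kappa d p = kappa_set d (ball1 d p \<inter> prim_pos d)"

definition Eset :: "nat \<Rightarrow> int set" where
  "Eset d = (\<Union>p\<in>{p. 0 < p \<and> d dvd p \<and> d \<noteq> p}.
              {kappa d (p - 1) + int p div int d, kappa d p - int p div int d})"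

definition zeta_nat :: "nat \<Rightarrow> real" where
  "zeta_nat s = (\<Sum>n. 1 / real (Suc n) ^ s)"

end

theory Submission
  imports Defs
begin


lemma abs_le_l1norm: "i < d \<Longrightarrow> \<bar>x i\<bar> \<le> l1norm d x"
  unfolding l1norm_def
  by (rule member_le_sum[where f="\<lambda>i. \<bar>x i\<bar>"]) auto

lemma l1norm_nonneg: "l1norm d x \<ge> 0"
  unfolding l1norm_def by (simp add: sum_nonneg)

lemma finite_ball1: "finite (ball1 d n)"
proof -
  let ?e = "\<lambda>f i. if i < d then f i else (0::int)"
  have "ball1 d n \<subseteq> ?e ` (PiE {..<d} (\<lambda>_. {-int n..int n}))"
  proof
    fix x assume x: "x \<in> ball1 d n"
    then have lat: "\<forall>i\<ge>d. x i = 0" and nx: "l1norm d x \<le> int n"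
      by (auto simp: ball1_def lattice_pts_def)
    let ?r = "restrict x {..<d}"
    have "?r \<in> PiE {..<d} (\<lambda>_. {-int n..int n})"
    proof (rule restrict_PiE_iff[THEN iffD2], intro ballI)
      fix i assume "i \<in> {..<d}"
      then have "\<bar>x i\<bar> \<le> int n" using abs_le_l1norm[of i d x] nx by auto
      then show "x i \<in> {-int n..int n}" by auto
    qed
    moreover have "x = ?e ?r" using lat by (auto simp: fun_eq_iff)
    ultimately show "x \<in> ?e ` (PiE {..<d} (\<lambda>_. {-int n..int n}))" by blast
  qed
  then show ?thesis by (rule finite_subset) (auto intro: finite_PiE)
qed

lemma l1norm_upd: "x \<in> lattice_pts d \<Longrightarrow> l1norm (Suc d) (x(d := t)) = l1norm d x + \<bar>t\<bar>"
  unfolding l1norm_def by (simp add: lattice_pts_def)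

lemma l1norm_Suc: "l1norm (Suc d) y = l1norm d y + \<bar>y d\<bar>"
  unfolding l1norm_def by simp

lemma l1norm_cong: "(\<And>i. i < d \<Longrightarrow> x i = y i) \<Longrightarrow> l1norm d x = l1norm d y"
  unfolding l1norm_def by simp

lemma ball1_Suc:
  "ball1 (Suc d) n = (\<Union>t\<in>{-int n..int n}. (\<lambda>x. x(d := t)) ` ball1 d (nat (int n - \<bar>t\<bar>)))"
proof (intro equalityI subsetI)
  fix y assume y: "y \<in> ball1 (Suc d) n"
  then have lat: "\<forall>i\<ge>Suc d. y i = 0" and ny: "l1norm (Suc d) y \<le> int n"
    by (auto simp: ball1_def lattice_pts_def)
  have "\<bar>y d\<bar> \<le> int n" using abs_le_l1norm[of d "Suc d" y] ny by simp
  then have t: "y d \<in> {-int n..int n}" by auto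
  have l: "y(d := 0) \<in> lattice_pts d" using lat by (auto simp: lattice_pts_def le_Suc_eq)
  have "l1norm d (y(d:=0)) = l1norm d y" by (rule l1norm_cong) simp
  then have "y(d:=0) \<in> ball1 d (nat (int n - \<bar>y d\<bar>))"
    using l ny l1norm_Suc[of d y] by (auto simp: ball1_def)
  moreover have "y = (y(d:=0))(d := y d)" by simp
  ultimately show "y \<in> (\<Union>t\<in>{-int n..int n}. (\<lambda>x. x(d := t)) ` ball1 d (nat (int n - \<bar>t\<bar>)))"
    using t by blast
next
  fix y assume "y \<in> (\<Union>t\<in>{-int n..int n}. (\<lambda>x. x(d := t)) ` ball1 d (nat (int n - \<bar>t\<bar>)))"
  then obtain t x where t: "t \<in> {-int n..int n}" and x: "x \<in> ball1 d (nat (int n - \<bar>t\<bar>))"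
    and y: "y = x(d := t)" by blast
  have lx: "x \<in> lattice_pts d" using x by (simp add: ball1_def)
  have "l1norm (Suc d) y \<le> int n" using x t l1norm_upd[OF lx, of t] y by (auto simp: ball1_def split: if_splits)
  moreover have "y \<in> lattice_pts (Suc d)" using lx y by (auto simp: lattice_pts_def)
  ultimately show "y \<in> ball1 (Suc d) n" by (simp add: ball1_def)
qed

lemma card_ball1_Suc:
  "card (ball1 (Suc d) n) = (\<Sum>t\<in>{-int n..int n}. card (ball1 d (nat (int n - \<bar>t\<bar>))))"
proof -
  have "card (ball1 (Suc d) n) = (\<Sum>t\<in>{-int n..int n}. card ((\<lambda>x. x(d := t)) ` ball1 d (nat (int n - \<bar>t\<bar>))))"
    unfolding ball1_Suc
    by (rule card_UN_disjoint) (auto simp: finite_ball1 fun_eq_iff, metis fun_upd_same)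
  also have "\<dots> = (\<Sum>t\<in>{-int n..int n}. card (ball1 d (nat (int n - \<bar>t\<bar>))))"
  proof (rule sum.cong[OF refl], rule card_image)
    fix t show "inj_on (\<lambda>x. x(d := t)) (ball1 d (nat (int n - \<bar>t\<bar>)))"
    proof (rule inj_onI)
      fix x y assume "x \<in> ball1 d (nat (int n - \<bar>t\<bar>))" "y \<in> ball1 d (nat (int n - \<bar>t\<bar>))"
        "x(d := t) = y(d := t)"
      then show "x = y" by (auto simp: ball1_def lattice_pts_def fun_eq_iff) (metis order.refl)
    qed
  qed
  finally show ?thesis .
qed

lemma sum_symm_int:
  fixes h :: "int \<Rightarrow> 'a::comm_monoid_add"
  shows "(\<Sum>t\<in>{-int n..int n}. h \<bar>t\<bar>) = h 0 + (\<Sum>j\<in>{1..n}. h (int j) + h (int j))"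
proof (induction n)
  case 0
  then show ?case by simp
next
  case (Suc n)
  have "{-int (Suc n)..int (Suc n)} = insert (-int (Suc n)) (insert (int (Suc n)) {-int n..int n})"
    by auto
  then have "(\<Sum>t\<in>{-int (Suc n)..int (Suc n)}. h \<bar>t\<bar>) = h (int (Suc n)) + (h (int (Suc n)) + (\<Sum>t\<in>{-int n..int n}. h \<bar>t\<bar>))"
    by (simp add: add_ac)
  then show ?case using Suc by (simp add: add_ac)
qed

lemma card_ball1_rec:
  "real (card (ball1 (Suc d) n)) = real (card (ball1 d n)) + 2 * (\<Sum>j<n. real (card (ball1 d j)))"
proof -
  let ?h = "\<lambda>a. real (card (ball1 d (nat (int n - a))))"
  have "real (card (ball1 (Suc d) n)) = (\<Sum>t\<in>{-int n..int n}. ?h \<bar>t\<bar>)"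
    unfolding card_ball1_Suc by simp
  also have "\<dots> = ?h 0 + (\<Sum>j\<in>{1..n}. ?h (int j) + ?h (int j))" by (rule sum_symm_int)
  also have "(\<Sum>j\<in>{1..n}. ?h (int j) + ?h (int j)) = 2 * (\<Sum>j\<in>{1..n}. ?h (int j))"
    by (simp add: sum.distrib sum_distrib_left)
  also have "(\<Sum>j\<in>{1..n}. ?h (int j)) = (\<Sum>j<n. real (card (ball1 d j)))"
  proof -
    have "(\<Sum>j\<in>{1..n}. ?h (int j)) = (\<Sum>j\<in>{1..n}. real (card (ball1 d (n - j))))"
      by (rule sum.cong) (auto simp: nat_diff_distrib)
    also have "\<dots> = (\<Sum>j<n. real (card (ball1 d j)))"
    proof (rule sum.reindex_bij_witness[of _ "\<lambda>j. n - j" "\<lambda>j. n - j"]) 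
    qed auto
    finally show ?thesis .
  qed
  finally show ?thesis by simp
qed

lemma ball1_0: "ball1 0 n = {\<lambda>_. 0}"
  by (auto simp: ball1_def lattice_pts_def l1norm_def fun_eq_iff)



lemma pow_step_bounds:
  fixes m :: real assumes "m \<ge> 0"
  shows "real (Suc k) * m ^ k \<le> (m + 1) ^ Suc k - m ^ Suc k"
    and "(m + 1) ^ Suc k - m ^ Suc k \<le> real (Suc k) * (m + 1) ^ k"
proof -
  have eq: "(m + 1) ^ Suc k - m ^ Suc k = (\<Sum>i<Suc k. (m + 1) ^ i * m ^ (k - i))"
    using diff_power_eq_sum[of "m+1" k m] by (simp only: add_diff_cancel_left' mult_1)
  have lo: "m ^ k \<le> (m + 1) ^ i * m ^ (k - i)" if "i < Suc k" for i
  proof -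
    have "m ^ k = m ^ i * m ^ (k - i)" using that by (simp flip: power_add)
    also have "\<dots> \<le> (m + 1) ^ i * m ^ (k - i)"
      by (rule mult_right_mono) (auto intro: power_mono simp: assms)
    finally show ?thesis .
  qed
  have hi: "(m + 1) ^ i * m ^ (k - i) \<le> (m + 1) ^ k" if "i < Suc k" for i
  proof -
    have "(m + 1) ^ i * m ^ (k - i) \<le> (m + 1) ^ i * (m + 1) ^ (k - i)"
      by (rule mult_left_mono) (auto intro: power_mono simp: assms)
    also have "\<dots> = (m + 1) ^ k" using that by (simp flip: power_add)
    finally show ?thesis .
  qed
  show "real (Suc k) * m ^ k \<le> (m + 1) ^ Suc k - m ^ Suc k"
  proof -
    have "(\<Sum>i<Suc k. m ^ k) \<le> (\<Sum>i<Suc k. (m + 1) ^ i * m ^ (k - i))"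
      by (rule sum_mono) (rule lo, simp)
    then show ?thesis unfolding eq by simp
  qed
  show "(m + 1) ^ Suc k - m ^ Suc k \<le> real (Suc k) * (m + 1) ^ k"
  proof -
    have "(\<Sum>i<Suc k. (m + 1) ^ i * m ^ (k - i)) \<le> (\<Sum>i<Suc k. (m+1) ^ k)"
      by (rule sum_mono) (rule hi, simp)
    then show ?thesis unfolding eq by simp
  qed
qed

lemma sum_pow_bounds:
  shows "(\<Sum>m<n. real m ^ k) \<le> real n ^ Suc k / real (Suc k)"
    and "real n ^ Suc k / real (Suc k) - real n ^ k \<le> (\<Sum>m<n. real m ^ k)"
proof -
  have tel: "(\<Sum>m<n. (real m + 1) ^ Suc k - real m ^ Suc k) = real n ^ Suc k"
    using sum_lessThan_telescope[of "\<lambda>m. real m ^ Suc k" n] by (simp add: add.commute)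
  have "real (Suc k) * (\<Sum>m<n. real m ^ k) \<le> (\<Sum>m<n. (real m + 1) ^ Suc k - real m ^ Suc k)"
    unfolding sum_distrib_left by (rule sum_mono) (rule pow_step_bounds(1), simp)
  then show "(\<Sum>m<n. real m ^ k) \<le> real n ^ Suc k / real (Suc k)"
    unfolding tel by (simp add: field_simps)
  have "(\<Sum>m<n. (real m + 1) ^ Suc k - real m ^ Suc k) \<le> real (Suc k) * (\<Sum>m<n. (real m + 1) ^ k)"
    unfolding sum_distrib_left by (rule sum_mono) (rule pow_step_bounds(2), simp)
  also have "(\<Sum>m<n. (real m + 1) ^ k) = (\<Sum>m<Suc n. real m ^ k) - 0 ^ k"
    by (subst sum.lessThan_Suc_shift) (simp add: add.commute)
  also have "\<dots> = (\<Sum>m<n. real m ^ k) + real n ^ k - 0 ^ k" by simp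
  finally have "real n ^ Suc k \<le> real (Suc k) * ((\<Sum>m<n. real m ^ k) + real n ^ k - 0 ^ k)"
    unfolding tel .
  moreover have "(0::real) ^ k \<ge> 0" by simp
  ultimately have "real n ^ Suc k \<le> real (Suc k) * ((\<Sum>m<n. real m ^ k) + real n ^ k)"
    by (smt (verit, best) mult_left_mono of_nat_0_le_iff)
  then show "real n ^ Suc k / real (Suc k) - real n ^ k \<le> (\<Sum>m<n. real m ^ k)"
    by (simp add: field_simps)
qed

lemma sum_pow_limit:
  "(\<lambda>n. (\<Sum>m<n. real m ^ k) / real n ^ Suc k) \<longlonglongrightarrow> 1 / real (Suc k)"
proof (rule tendsto_sandwich[of "\<lambda>n. 1 / real (Suc k) - 1 / real n" _ _ "\<lambda>n. 1 / real (Suc k)"])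
  show "\<forall>\<^sub>F n in sequentially. 1 / real (Suc k) - 1 / real n \<le> (\<Sum>m<n. real m ^ k) / real n ^ Suc k"
    using eventually_gt_at_top[of 0]
  proof eventually_elim
    case (elim n)
    have "real n ^ Suc k / real (Suc k) - real n ^ k \<le> (\<Sum>m<n. real m ^ k)"
      by (rule sum_pow_bounds(2))
    then have "(real n ^ Suc k / real (Suc k) - real n ^ k) / real n ^ Suc k \<le> (\<Sum>m<n. real m ^ k) / real n ^ Suc k"
      by (rule divide_right_mono) simp
    moreover have "(real n ^ Suc k / real (Suc k) - real n ^ k) / real n ^ Suc k = 1 / real (Suc k) - 1 / real n"
      using elim by (simp add: diff_divide_distrib)
    ultimately show ?case by simp
  qed
  show "\<forall>\<^sub>F n in sequentially. (\<Sum>m<n. real m ^ k) / real n ^ Suc k \<le> 1 / real (Suc k)"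
    using eventually_gt_at_top[of 0]
  proof eventually_elim
    case (elim n)
    have "(\<Sum>m<n. real m ^ k) / real n ^ Suc k \<le> (real n ^ Suc k / real (Suc k)) / real n ^ Suc k"
      by (rule divide_right_mono[OF sum_pow_bounds(1)]) simp
    then show ?case using elim by simp
  qed
  show "(\<lambda>n. 1 / real (Suc k) - 1 / real n) \<longlonglongrightarrow> 1 / real (Suc k)"
    using tendsto_diff[OF tendsto_const lim_inverse_n'[unfolded inverse_eq_divide]] by simp
qed simp

lemma cesaro_small:
  fixes g :: "nat \<Rightarrow> real"
  assumes "(\<lambda>n. g n / real n ^ k) \<longlonglongrightarrow> 0"
  shows "(\<lambda>n. (\<Sum>m<n. g m) / real n ^ Suc k) \<longlonglongrightarrow> 0"
proof (rule LIMSEQ_I)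
  fix r :: real assume r: "r > 0"
  obtain N0 where N0: "\<And>m. m \<ge> N0 \<Longrightarrow> norm (g m / real m ^ k) < r / 2"
    using LIMSEQ_D[OF assms, of "r/2"] r by auto
  define N where "N = Suc N0"
  have N: "\<And>m. m \<ge> N \<Longrightarrow> norm (g m / real m ^ k) < r / 2" using N0 N_def by auto
  have N1: "N \<ge> 1" using N_def by simp
  define C where "C = (\<Sum>m<N. \<bar>g m\<bar>)"
  have C0: "C \<ge> 0" unfolding C_def by (simp add: sum_nonneg)
  have bound: "\<bar>\<Sum>m<n. g m\<bar> \<le> C + r / 2 * real n ^ Suc k" if "n \<ge> N" for n
  proof -
    have "\<bar>\<Sum>m<n. g m\<bar> \<le> (\<Sum>m<n. \<bar>g m\<bar>)" by (rule sum_abs)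
    also have "(\<Sum>m<n. \<bar>g m\<bar>) = C + (\<Sum>m\<in>{N..<n}. \<bar>g m\<bar>)"
    proof -
      have "{..<n} = {..<N} \<union> {N..<n}" using that by auto
      moreover have "(\<Sum>m\<in>{..<N} \<union> {N..<n}. \<bar>g m\<bar>) = (\<Sum>m<N. \<bar>g m\<bar>) + (\<Sum>m\<in>{N..<n}. \<bar>g m\<bar>)"
        by (rule sum.union_disjoint) auto
      ultimately show ?thesis unfolding C_def by simp
    qed
    also have "(\<Sum>m\<in>{N..<n}. \<bar>g m\<bar>) \<le> (\<Sum>m\<in>{N..<n}. r / 2 * real m ^ k)"
    proof (rule sum_mono)
      fix m assume m: "m \<in> {N..<n}"
      show "\<bar>g m\<bar> \<le> r / 2 * real m ^ k"
      proof -
        have False: "m \<noteq> 0" using m N1 by auto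
        have "\<bar>g m\<bar> / real m ^ k < r / 2" using N[of m] m False by (simp add: abs_divide)
        then show ?thesis using False by (simp add: divide_less_eq)
      qed
    qed
    also have "\<dots> \<le> (\<Sum>m<n. r / 2 * real m ^ k)"
      by (rule sum_mono2) (use r in auto)
    also have "\<dots> = r / 2 * (\<Sum>m<n. real m ^ k)" by (simp add: sum_distrib_left)
    also have "\<dots> \<le> r / 2 * (real n ^ Suc k / real (Suc k))"
      by (rule mult_left_mono[OF sum_pow_bounds(1)]) (use r in auto)
    also have "\<dots> \<le> r / 2 * real n ^ Suc k"
      by (rule mult_left_mono) (use r in \<open>auto simp: field_simps\<close>)
    finally show ?thesis by simp
  qed
  have "(\<lambda>n. C / real n ^ Suc k) \<longlonglongrightarrow> 0"
  proof -
    have "filterlim (\<lambda>n. real n ^ Suc k) at_top sequentially"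
      by (intro filterlim_pow_at_top filterlim_real_sequentially) simp
    then show ?thesis by (intro tendsto_divide_0[OF tendsto_const] filterlim_at_top_imp_at_infinity)
  qed
  from LIMSEQ_D[OF this, of "r/2"] r obtain M where M: "\<And>n. n \<ge> M \<Longrightarrow> norm (C / real n ^ Suc k - 0) < r / 2"
    by auto
  show "\<exists>no. \<forall>n\<ge>no. norm ((\<Sum>m<n. g m) / real n ^ Suc k - 0) < r"
  proof (intro exI allI impI)
    fix n assume n: "n \<ge> max (max N M) 1"
    then have np: "real n ^ Suc k > 0" by simp
    have "norm ((\<Sum>m<n. g m) / real n ^ Suc k - 0) = \<bar>\<Sum>m<n. g m\<bar> / real n ^ Suc k"
      by (simp add: abs_divide)
    also have "\<dots> \<le> (C + r / 2 * real n ^ Suc k) / real n ^ Suc k"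
      by (rule divide_right_mono[OF bound]) (use n in auto)
    also have "\<dots> = C / real n ^ Suc k + r / 2" using np by (simp add: add_divide_distrib del: power_Suc)
    also have "\<dots> < r / 2 + r / 2"
    proof -
      have "\<bar>C / real n ^ Suc k\<bar> < r / 2" using M[of n] n by simp
      then show ?thesis using abs_ge_self[of "C / real n ^ Suc k"] by linarith
    qed
    finally show "norm ((\<Sum>m<n. g m) / real n ^ Suc k - 0) < r" by simp
  qed
qed

lemma cesaro_pow:
  fixes f :: "nat \<Rightarrow> real"
  assumes "(\<lambda>n. f n / real n ^ k) \<longlonglongrightarrow> a"
  shows "(\<lambda>n. (\<Sum>m<n. f m) / real n ^ Suc k) \<longlonglongrightarrow> a / real (Suc k)"
proof -
  define g where "g m = f m - a * real m ^ k" for m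
  have "(\<lambda>n. f n / real n ^ k - a) \<longlonglongrightarrow> 0"
    using tendsto_diff[OF assms tendsto_const[of a]] by simp
  moreover have "eventually (\<lambda>n. f n / real n ^ k - a = g n / real n ^ k) sequentially"
    using eventually_gt_at_top[of 0] by eventually_elim (simp add: g_def field_simps)
  ultimately have "(\<lambda>n. g n / real n ^ k) \<longlonglongrightarrow> 0" by (rule Lim_transform_eventually)
  then have A: "(\<lambda>n. (\<Sum>m<n. g m) / real n ^ Suc k) \<longlonglongrightarrow> 0" by (rule cesaro_small)
  have B: "(\<lambda>n. a * ((\<Sum>m<n. real m ^ k) / real n ^ Suc k)) \<longlonglongrightarrow> a * (1 / real (Suc k))"
    by (intro tendsto_mult tendsto_const sum_pow_limit)
  have "(\<lambda>n. (\<Sum>m<n. g m) / real n ^ Suc k + a * ((\<Sum>m<n. real m ^ k) / real n ^ Suc k)) \<longlonglongrightarrow> 0 + a * (1 / real (Suc k))"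
    by (rule tendsto_add[OF A B])
  moreover have "(\<Sum>m<n. g m) / real n ^ Suc k + a * ((\<Sum>m<n. real m ^ k) / real n ^ Suc k) = (\<Sum>m<n. f m) / real n ^ Suc k" for n
    by (simp add: g_def sum_subtractf sum_distrib_left field_simps add_divide_distrib diff_divide_distrib)
  ultimately show ?thesis by simp
qed



lemma cnt_limit: "(\<lambda>n. real (card (ball1 d n)) / real n ^ d) \<longlonglongrightarrow> 2 ^ d / fact d"
proof (induction d)
  case 0
  then show ?case by (simp add: ball1_0)
next
  case (Suc d)
  let ?a = "(2::real) ^ d / fact d"
  have A: "(\<lambda>n. real (card (ball1 d n)) / real n ^ d * (1 / real n)) \<longlonglongrightarrow> ?a * 0"
    by (intro tendsto_mult Suc lim_inverse_n'[unfolded inverse_eq_divide])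
  have B: "(\<lambda>n. 2 * ((\<Sum>j<n. real (card (ball1 d j))) / real n ^ Suc d)) \<longlonglongrightarrow> 2 * (?a / real (Suc d))"
    by (intro tendsto_mult tendsto_const cesaro_pow Suc)
  have L: "(\<lambda>n. real (card (ball1 d n)) / real n ^ d * (1 / real n) + 2 * ((\<Sum>j<n. real (card (ball1 d j))) / real n ^ Suc d))
     \<longlonglongrightarrow> ?a * 0 + 2 * (?a / real (Suc d))" by (rule tendsto_add[OF A B])
  have E: "eventually (\<lambda>n. real (card (ball1 d n)) / real n ^ d * (1 / real n) + 2 * ((\<Sum>j<n. real (card (ball1 d j))) / real n ^ Suc d)
     = real (card (ball1 (Suc d) n)) / real n ^ Suc d) sequentially"
    using eventually_gt_at_top[of 0]
    by eventually_elim (simp add: card_ball1_rec add_divide_distrib)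
  have V: "?a * 0 + 2 * (?a / real (Suc d)) = 2 ^ Suc d / fact (Suc d)"
    by (simp add: field_simps)
  show ?case using Lim_transform_eventually[OF L E] unfolding V .
qed

definition Vsum :: "nat \<Rightarrow> nat \<Rightarrow> real" where
  "Vsum d n = (\<Sum>x\<in>ball1 d n. real_of_int (l1norm d x))"

lemma ball1_mono: "m \<le> n \<Longrightarrow> ball1 d m \<subseteq> ball1 d n"
  by (auto simp: ball1_def)

lemma Vsum_eq: "Vsum d n = real n * real (card (ball1 d n)) - (\<Sum>m<n. real (card (ball1 d m)))"
proof -
  have key: "real_of_int (l1norm d x) = (\<Sum>m<n. if x \<in> ball1 d m then 0 else 1)"
    if x: "x \<in> ball1 d n" for x
  proof -
    have lat: "x \<in> lattice_pts d" and nx: "l1norm d x \<le> int n" using x by (auto simp: ball1_def)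
    have "(\<Sum>m<n. if x \<in> ball1 d m then 0 else (1::real)) = (\<Sum>m\<in>{..<n} \<inter> - {m. l1norm d x \<le> int m}. 1)"
      by (simp add: sum.If_cases ball1_def lat)
    also have "{..<n} \<inter> - {m. l1norm d x \<le> int m} = {..<nat (l1norm d x)}"
      using nx l1norm_nonneg[of d x] by auto
    finally show ?thesis using l1norm_nonneg[of d x] by simp
  qed
  have "Vsum d n = (\<Sum>x\<in>ball1 d n. \<Sum>m<n. if x \<in> ball1 d m then 0 else (1::real))"
    unfolding Vsum_def by (rule sum.cong[OF refl] key)+
  also have "\<dots> = (\<Sum>m<n. \<Sum>x\<in>ball1 d n. if x \<in> ball1 d m then 0 else (1::real))"
    by (rule sum.swap)
  also have "\<dots> = (\<Sum>m<n. real (card (ball1 d n)) - real (card (ball1 d m)))"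
  proof (rule sum.cong[OF refl])
    fix m assume "m \<in> {..<n}"
    then have sub: "ball1 d m \<subseteq> ball1 d n" by (intro ball1_mono) simp
    have "(\<Sum>x\<in>ball1 d n. if x \<in> ball1 d m then 0 else (1::real)) = (\<Sum>x\<in>ball1 d n - ball1 d m. 1)"
      by (simp add: sum.If_cases finite_ball1 Diff_eq)
    also have "\<dots> = real (card (ball1 d n)) - real (card (ball1 d m))"
      using sub by (simp add: card_Diff_subset finite_ball1 card_mono of_nat_diff)
    finally show "(\<Sum>x\<in>ball1 d n. if x \<in> ball1 d m then 0 else (1::real)) = real (card (ball1 d n)) - real (card (ball1 d m))" .
  qed
  also have "\<dots> = real n * real (card (ball1 d n)) - (\<Sum>m<n. real (card (ball1 d m)))"
    by (simp add: sum_subtractf)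
  finally show ?thesis .
qed

lemma Vsum_limit:
  "(\<lambda>n. Vsum d n / real n ^ Suc d) \<longlonglongrightarrow> 2 ^ d / fact d - 2 ^ d / fact d / real (Suc d)"
proof -
  have "(\<lambda>n. real (card (ball1 d n)) / real n ^ d - (\<Sum>m<n. real (card (ball1 d m))) / real n ^ Suc d)
     \<longlonglongrightarrow> 2 ^ d / fact d - 2 ^ d / fact d / real (Suc d)"
    by (intro tendsto_diff cnt_limit cesaro_pow)
  moreover have "eventually (\<lambda>n. real (card (ball1 d n)) / real n ^ d - (\<Sum>m<n. real (card (ball1 d m))) / real n ^ Suc d
     = Vsum d n / real n ^ Suc d) sequentially"
    using eventually_gt_at_top[of 0]
    by eventually_elim (simp add: Vsum_eq diff_divide_distrib)
  ultimately show ?thesis by (rule Lim_transform_eventually)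
qed



definition PB :: "nat \<Rightarrow> nat \<Rightarrow> (nat \<Rightarrow> int) set" where
  "PB d p = ball1 d p \<inter> {x. primitive d x}"

lemma finite_PB: "finite (PB d p)"
  unfolding PB_def using finite_ball1 by auto

lemma Gcd_uminus_img: "Gcd ((\<lambda>a. - a) ` (A::int set)) = Gcd A"
proof -
  have "Gcd ((*) (-1) ` A) = normalize (-1 * Gcd A)" by (rule Gcd_mult)
  moreover have "(*) (-1) ` A = (\<lambda>a. - a) ` A" by auto
  ultimately show ?thesis by simp
qed

lemma primitive_uminus: "primitive d x \<Longrightarrow> primitive d (- x)"
proof -
  assume "primitive d x"
  moreover have "(- x) ` {..<d} = (\<lambda>a. - a) ` (x ` {..<d})" by auto
  ultimately show ?thesis
    by (auto simp: primitive_def lattice_pts_def Gcd_uminus_img)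
qed

lemma primitive_nonzero: "primitive d x \<Longrightarrow> \<exists>i<d. x i \<noteq> 0"
proof (rule ccontr)
  assume p: "primitive d x" and "\<not> (\<exists>i<d. x i \<noteq> 0)"
  then have "x ` {..<d} \<subseteq> {0}" by auto
  then have "Gcd (x ` {..<d}) = 0" by simp
  then show False using p by (auto simp: primitive_def simp del: Gcd_0_iff)
qed

lemma not_both_pos: "x \<in> prim_pos d \<Longrightarrow> - x \<in> prim_pos d \<Longrightarrow> False"
proof -
  assume a: "x \<in> prim_pos d" and b: "- x \<in> prim_pos d"
  from a obtain i where i: "x i > 0" "\<forall>j<i. x j = 0" by (auto simp: prim_pos_def)
  from b obtain k where k: "- x k > 0" "\<forall>j<k. - x j = 0" by (auto simp: prim_pos_def)
  show False
  proof (cases i k rule: linorder_cases)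
    case less then show ?thesis using i k by force
  next
    case equal then show ?thesis using i k by force
  next
    case greater then show ?thesis using i k by force
  qed
qed

lemma one_pos: "primitive d x \<Longrightarrow> x \<in> prim_pos d \<or> - x \<in> prim_pos d"
proof -
  assume p: "primitive d x"
  then obtain i0 where "i0 < d" "x i0 \<noteq> 0" using primitive_nonzero by blast
  define i where "i = (LEAST i. x i \<noteq> 0)"
  have xi: "x i \<noteq> 0" unfolding i_def by (rule LeastI) fact
  have ile: "i \<le> i0" unfolding i_def by (rule Least_le) fact
  have below: "\<forall>j<i. x j = 0" unfolding i_def using not_less_Least by blast
  show ?thesis
  proof (cases "x i > 0")
    case True
    then show ?thesis using p below ile \<open>i0 < d\<close> by (auto simp: prim_pos_def intro!: exI[of _ i])
  next
    case False
    then have "(- x) i > 0" using xi by simp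
    then show ?thesis using primitive_uminus[OF p] below ile \<open>i0 < d\<close>
      by (auto simp: prim_pos_def intro!: exI[of _ i])
  qed
qed

lemma l1norm_uminus: "l1norm d (- x) = l1norm d x"
  by (simp add: l1norm_def)

lemma PB_uminus: "x \<in> PB d p \<Longrightarrow> - x \<in> PB d p"
  by (auto simp: PB_def ball1_def lattice_pts_def l1norm_uminus primitive_uminus)

lemma prim_pos_primitive: "x \<in> prim_pos d \<Longrightarrow> primitive d x"
  by (simp add: prim_pos_def)

lemma sum_PB_split:
  fixes f :: "(nat \<Rightarrow> int) \<Rightarrow> 'a::comm_monoid_add"
  shows "(\<Sum>x\<in>PB d p. f x) = (\<Sum>x\<in>PB d p \<inter> prim_pos d. f x) + (\<Sum>x\<in>PB d p \<inter> prim_pos d. f (- x))"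
proof -
  let ?A = "PB d p \<inter> prim_pos d"
  have eq: "PB d p = ?A \<union> uminus ` ?A"
  proof (intro equalityI subsetI)
    fix x assume x: "x \<in> PB d p"
    then have "primitive d x" by (simp add: PB_def)
    then have "x \<in> prim_pos d \<or> - x \<in> prim_pos d" by (rule one_pos)
    then show "x \<in> ?A \<union> uminus ` ?A"
    proof
      assume "- x \<in> prim_pos d"
      moreover have "- x \<in> PB d p" using x by (rule PB_uminus)
      moreover have "x = - (- x)" by (simp add: fun_eq_iff)
      ultimately show ?thesis by blast
    qed (use x in auto)
  next
    fix x assume "x \<in> ?A \<union> uminus ` ?A"
    then show "x \<in> PB d p" using PB_uminus by auto
  qed
  have disj: "?A \<inter> uminus ` ?A = {}" using not_both_pos by fastforce
  have "(\<Sum>x\<in>PB d p. f x) = (\<Sum>x\<in>?A. f x) + (\<Sum>x\<in>uminus ` ?A. f x)"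
    by (subst eq, rule sum.union_disjoint) (use finite_PB disj in auto)
  also have "(\<Sum>x\<in>uminus ` ?A. f x) = (\<Sum>x\<in>?A. f (- x))"
  proof (rule sum.reindex[unfolded comp_def])
    show "inj_on uminus ?A" by (rule inj_onI) (auto simp: fun_eq_iff)
  qed
  finally show ?thesis .
qed

definition swp :: "nat \<Rightarrow> nat \<Rightarrow> nat \<Rightarrow> nat" where
  "swp i j k = (if k = i then j else if k = j then i else k)"

lemma swp_swp [simp]: "swp i j (swp i j k) = k"
  by (auto simp: swp_def)

lemma swp_img: "i < d \<Longrightarrow> j < d \<Longrightarrow> swp i j ` {..<d} = {..<d}"
  by (auto simp: swp_def image_iff)

lemma bij_swp: "i < d \<Longrightarrow> j < d \<Longrightarrow> bij_betw (swp i j) {..<d} {..<d}"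
  by (rule bij_betw_imageI) (auto simp: swp_img inj_on_def, metis swp_swp)

lemma PB_swp:
  assumes "i < d" "j < d" "x \<in> PB d p" shows "x \<circ> swp i j \<in> PB d p"
proof -
  have l: "x \<circ> swp i j \<in> lattice_pts d" using assms by (auto simp: PB_def ball1_def lattice_pts_def swp_def)
  have "(x \<circ> swp i j) ` {..<d} = x ` (swp i j ` {..<d})" by (simp add: image_comp)
  then have "(x \<circ> swp i j) ` {..<d} = x ` {..<d}" using swp_img[OF assms(1,2)] by simp
  moreover have "l1norm d (x \<circ> swp i j) = l1norm d x"
    unfolding l1norm_def using sum.reindex_bij_betw[OF bij_swp[OF assms(1,2)], of "\<lambda>k. \<bar>x k\<bar>"] by simp
  ultimately show ?thesis using assms l by (auto simp: PB_def ball1_def primitive_def)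
qed

lemma sum_coord_eq:
  assumes "i < d" "j < d"
  shows "(\<Sum>x\<in>PB d p. \<bar>x i\<bar>) = (\<Sum>x\<in>PB d p. \<bar>x j\<bar>)"
proof -
  have bij: "bij_betw (\<lambda>x. x \<circ> swp i j) (PB d p) (PB d p)"
  proof (rule bij_betw_byWitness[where f' = "\<lambda>x. x \<circ> swp i j"])
    show "\<forall>a\<in>PB d p. a \<circ> swp i j \<circ> swp i j = a" by (auto simp: fun_eq_iff)
    show "\<forall>a'\<in>PB d p. a' \<circ> swp i j \<circ> swp i j = a'" by (auto simp: fun_eq_iff)
    show "(\<lambda>x. x \<circ> swp i j) ` PB d p \<subseteq> PB d p" using PB_swp[OF assms] by auto
    show "(\<lambda>x. x \<circ> swp i j) ` PB d p \<subseteq> PB d p" using PB_swp[OF assms] by auto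
  qed
  have "(\<Sum>x\<in>PB d p. \<bar>x j\<bar>) = (\<Sum>x\<in>PB d p. \<bar>(x \<circ> swp i j) j\<bar>)"
    using sum.reindex_bij_betw[OF bij, of "\<lambda>x. \<bar>x j\<bar>"] by simp
  also have "\<dots> = (\<Sum>x\<in>PB d p. \<bar>x i\<bar>)" by (simp add: swp_def)
  finally show ?thesis by simp
qed

lemma kappa_eq:
  assumes "d > 0"
  shows "2 * int d * kappa d p = (\<Sum>x\<in>PB d p. l1norm d x)"
proof -
  have set_eq: "ball1 d p \<inter> prim_pos d = PB d p \<inter> prim_pos d"
    by (auto simp: PB_def prim_pos_def)
  define F where "F = (\<Sum>x\<in>PB d p. \<bar>x 0\<bar>)"
  have half: "2 * (\<Sum>x\<in>PB d p \<inter> prim_pos d. \<bar>x i\<bar>) = F" if "i < d" for i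
  proof -
    have "(\<Sum>x\<in>PB d p. \<bar>x i\<bar>) = (\<Sum>x\<in>PB d p \<inter> prim_pos d. \<bar>x i\<bar>) + (\<Sum>x\<in>PB d p \<inter> prim_pos d. \<bar>(- x) i\<bar>)"
      by (rule sum_PB_split)
    then show ?thesis using sum_coord_eq[OF that assms] unfolding F_def by simp
  qed
  have img: "(\<lambda>i. \<Sum>x\<in>PB d p \<inter> prim_pos d. \<bar>x i\<bar>) ` {..<d} = {F div 2}"
  proof -
    have "\<forall>i\<in>{..<d}. (\<Sum>x\<in>PB d p \<inter> prim_pos d. \<bar>x i\<bar>) = F div 2"
    proof
      fix i assume "i \<in> {..<d}"
      then have "2 * (\<Sum>x\<in>PB d p \<inter> prim_pos d. \<bar>x i\<bar>) = F" using half by simp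
      then show "(\<Sum>x\<in>PB d p \<inter> prim_pos d. \<bar>x i\<bar>) = F div 2" by linarith
    qed
    moreover have "{..<d} \<noteq> {}" using assms by auto
    ultimately show ?thesis by (auto simp: image_iff)
  qed
  have k: "kappa d p = F div 2"
    unfolding kappa_def kappa_set_def set_eq img by simp
  have "(\<Sum>x\<in>PB d p. l1norm d x) = (\<Sum>i<d. \<Sum>x\<in>PB d p. \<bar>x i\<bar>)"
    unfolding l1norm_def by (rule sum.swap)
  also have "\<dots> = (\<Sum>i<d. F)"
    unfolding F_def by (rule sum.cong[OF refl], rule sum_coord_eq) (auto simp: assms)
  also have "\<dots> = int d * F" by simp
  finally have S: "(\<Sum>x\<in>PB d p. l1norm d x) = int d * F" .
  have Fe: "2 * (F div 2) = F" using half[OF assms] by (metis nonzero_mult_div_cancel_left zero_neq_numeral)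
  have "2 * int d * kappa d p = int d * (2 * (F div 2))" using k by simp
  then show ?thesis using S Fe by simp
qed



definition W :: "nat \<Rightarrow> nat \<Rightarrow> real" where
  "W d p = (\<Sum>x\<in>PB d p. real_of_int (l1norm d x))"

definition sc :: "nat \<Rightarrow> (nat \<Rightarrow> int) \<Rightarrow> nat \<Rightarrow> int" where
  "sc g y = (\<lambda>i. int g * y i)"

lemma Gcd_sc: "primitive d y \<Longrightarrow> Gcd (sc g y ` {..<d}) = int g"
proof -
  assume p: "primitive d y"
  have "sc g y ` {..<d} = (*) (int g) ` (y ` {..<d})" by (auto simp: sc_def)
  then have "Gcd (sc g y ` {..<d}) = normalize (int g * Gcd (y ` {..<d}))" by (simp add: Gcd_mult)
  then show ?thesis using p by (simp add: primitive_def)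
qed

lemma l1norm_sc: "l1norm d (sc g y) = int g * l1norm d y"
  by (simp add: l1norm_def sc_def abs_mult sum_distrib_left)

lemma ball_decomp:
  assumes "d > 0"
  shows "ball1 d p - {\<lambda>_. 0} = (\<Union>g\<in>{1..p}. sc g ` PB d (p div g))"
proof (intro equalityI subsetI)
  fix x assume x: "x \<in> ball1 d p - {\<lambda>_. 0}"
  then have lat: "x \<in> lattice_pts d" and nx: "l1norm d x \<le> int p" and nz: "x \<noteq> (\<lambda>_. 0)"
    by (auto simp: ball1_def)
  obtain i where i: "i < d" "x i \<noteq> 0"
  proof -
    have "\<exists>i<d. x i \<noteq> 0"
    proof (rule ccontr)
      assume "\<not> (\<exists>i<d. x i \<noteq> 0)"
      then have "x = (\<lambda>_. 0)" using lat by (auto simp: lattice_pts_def fun_eq_iff) (metis not_le)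
      then show False using nz by simp
    qed
    then show ?thesis using that by blast
  qed
  define G where "G = Gcd (x ` {..<d})"
  have G0: "G \<ge> 0" unfolding G_def by simp
  have "G \<noteq> 0" unfolding G_def using i by auto
  then have Gp: "G > 0" using G0 by simp
  define y where "y = (\<lambda>i. x i div G)"
  have xy: "x k = G * y k" for k
  proof (cases "k < d")
    case True
    then have "G dvd x k" unfolding G_def by (intro Gcd_dvd) auto
    then show ?thesis by (simp add: y_def)
  next
    case False
    then show ?thesis using lat by (simp add: y_def lattice_pts_def)
  qed
  define g where "g = nat G"
  have Gg: "G = int g" using G0 by (simp add: g_def)
  have xsc: "x = sc g y" by (auto simp: fun_eq_iff sc_def xy Gg)
  have laty: "y \<in> lattice_pts d" using lat by (auto simp: lattice_pts_def y_def)
  have ximg: "x ` {..<d} = (*) G ` (y ` {..<d})" by (auto simp: xy)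
  have "G = normalize (G * Gcd (y ` {..<d}))"
    using Gcd_mult[of G "y ` {..<d}"] unfolding ximg[symmetric] G_def[symmetric] .
  also have "\<dots> = G * Gcd (y ` {..<d})" using G0 by (simp add: abs_mult)
  finally have "Gcd (y ` {..<d}) = 1" using Gp by simp
  then have py: "primitive d y" using laty by (simp add: primitive_def)
  have ny1: "l1norm d y \<ge> 1"
  proof -
    have "y i \<noteq> 0" using i xy[of i] by auto
    then show ?thesis using abs_le_l1norm[OF i(1), of y] by linarith
  qed
  have nxy: "l1norm d x = G * l1norm d y" using l1norm_sc[of d g y] xsc Gg by simp
  have "G \<le> G * l1norm d y" using ny1 Gp by simp
  then have gle: "g \<le> p" using nx nxy Gg by linarith
  have g1: "g \<ge> 1" using Gp Gg by simp
  define n where "n = nat (l1norm d y)"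
  have nn: "l1norm d y = int n" using l1norm_nonneg[of d y] by (simp add: n_def)
  have "int (g * n) \<le> int p" using nx nxy Gg nn by simp
  then have "g * n \<le> p" by (simp only: of_nat_le_iff)
  then have "n * g \<le> p" by (simp add: mult.commute)
  then have "n \<le> p div g" using g1 by (simp add: less_eq_div_iff_mult_less_eq)
  then have "y \<in> PB d (p div g)" using py laty nn by (simp add: PB_def ball1_def)
  then show "x \<in> (\<Union>g\<in>{1..p}. sc g ` PB d (p div g))" using xsc g1 gle by auto
next
  fix x assume "x \<in> (\<Union>g\<in>{1..p}. sc g ` PB d (p div g))"
  then obtain g y where g: "g \<in> {1..p}" and y: "y \<in> PB d (p div g)" and xsc: "x = sc g y" by blast
  have laty: "y \<in> lattice_pts d" and py: "primitive d y" and ny: "l1norm d y \<le> int (p div g)"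
    using y by (auto simp: PB_def ball1_def)
  have lat: "x \<in> lattice_pts d" using laty xsc by (simp add: lattice_pts_def sc_def)
  have "l1norm d x = int g * l1norm d y" using xsc l1norm_sc by simp
  also have "\<dots> \<le> int g * int (p div g)" using ny g by (intro mult_left_mono) auto
  also have "\<dots> = int (g * (p div g))" by simp
  also have "\<dots> \<le> int p" by (simp only: of_nat_le_iff times_div_less_eq_dividend)
  finally have nx: "l1norm d x \<le> int p" .
  obtain i where "i < d" "y i \<noteq> 0" using primitive_nonzero[OF py] by blast
  then have "x \<noteq> (\<lambda>_. 0)" using xsc g by (auto simp: sc_def fun_eq_iff)
  then show "x \<in> ball1 d p - {\<lambda>_. 0}" using lat nx by (simp add: ball1_def)
qed

lemma Vsum_W:
  assumes "d > 0"
  shows "Vsum d p = (\<Sum>g\<in>{1..p}. real g * W d (p div g))"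
proof -
  let ?f = "\<lambda>x. real_of_int (l1norm d x)"
  have z: "(\<lambda>_. 0) \<in> ball1 d p" by (simp add: ball1_def lattice_pts_def l1norm_def)
  have "Vsum d p = ?f (\<lambda>_. 0) + sum ?f (ball1 d p - {\<lambda>_. 0})"
    unfolding Vsum_def by (rule sum.remove[OF finite_ball1 z])
  also have "?f (\<lambda>_. 0) = 0" by (simp add: l1norm_def)
  also have "sum ?f (ball1 d p - {\<lambda>_. 0}) = (\<Sum>g\<in>{1..p}. sum ?f (sc g ` PB d (p div g)))"
    unfolding ball_decomp[OF assms]
  proof (rule sum.UNION_disjoint)
    show "\<forall>g\<in>{1..p}. finite (sc g ` PB d (p div g))" using finite_PB by auto
    show "\<forall>g\<in>{1..p}. \<forall>h\<in>{1..p}. g \<noteq> h \<longrightarrow> sc g ` PB d (p div g) \<inter> sc h ` PB d (p div h) = {}"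
    proof (intro ballI impI)
      fix g h :: nat assume "g \<noteq> h"
      show "sc g ` PB d (p div g) \<inter> sc h ` PB d (p div h) = {}"
      proof (rule ccontr)
        assume "sc g ` PB d (p div g) \<inter> sc h ` PB d (p div h) \<noteq> {}"
        then obtain y z where y: "y \<in> PB d (p div g)" and z: "z \<in> PB d (p div h)" and e: "sc g y = sc h z"
          by blast
        have "int g = int h"
          using Gcd_sc[of d y g] Gcd_sc[of d z h] y z e by (simp add: PB_def)
        then show False using \<open>g \<noteq> h\<close> by simp
      qed
    qed
  qed simp
  also have "\<dots> = (\<Sum>g\<in>{1..p}. real g * W d (p div g))"
  proof (rule sum.cong[OF refl])
    fix g assume g: "g \<in> {1..p}"
    have inj: "inj_on (sc g) (PB d (p div g))"
      by (rule inj_onI) (use g in \<open>auto simp: sc_def fun_eq_iff\<close>)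
    have "sum ?f (sc g ` PB d (p div g)) = (\<Sum>y\<in>PB d (p div g). ?f (sc g y))"
      by (rule sum.reindex[OF inj, unfolded comp_def])
    also have "\<dots> = (\<Sum>y\<in>PB d (p div g). real g * real_of_int (l1norm d y))"
      by (simp add: l1norm_sc)
    also have "\<dots> = real g * W d (p div g)" by (simp add: W_def sum_distrib_left)
    finally show "sum ?f (sc g ` PB d (p div g)) = real g * W d (p div g)" .
  qed
  finally show ?thesis by simp
qed



lemma rdiv_le: "real (p div g) \<le> real p / real g"
proof (cases "g = 0")
  case True then show ?thesis by simp
next
  case False
  have "g * (p div g) \<le> p" by (rule times_div_less_eq_dividend)
  then have "real (g * (p div g)) \<le> real p" by (simp only: of_nat_le_iff)
  then have "real (p div g) * real g \<le> real p" by (simp add: mult.commute)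
  then show ?thesis using False by (simp add: pos_le_divide_eq)
qed

context
  fixes Wf Vf :: "nat \<Rightarrow> real" and d :: nat and A :: real
  assumes rel: "\<And>p. Vf p = (\<Sum>g\<in>{1..p}. real g * Wf (p div g))"
  and Wnn: "\<And>p. Wf p \<ge> 0"
  and Vlim: "(\<lambda>p. Vf p / real p ^ Suc d) \<longlonglongrightarrow> A"
  and summ: "summable (\<lambda>n. 1 / real (Suc n) ^ d)"
  and zlt: "suminf (\<lambda>n. 1 / real (Suc n) ^ d) < 2"
begin

definition "zt = suminf (\<lambda>n. 1 / real (Suc n) ^ d)"
definition "Zs N = (\<Sum>g\<in>{1..N}. 1 / real g ^ d)"
definition "rr g p = real g * real (p div g) ^ Suc d / real p ^ Suc d"
definition "RR p = (\<Sum>g\<in>{1..p}. rr g p)"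
definition "ss q = Wf q / real q ^ Suc d"
definition "vv p = Vf p / real p ^ Suc d"

lemma Zs_eq: "Zs N = (\<Sum>n<N. 1 / real (Suc n) ^ d)"
proof -
  have "{1..N} = Suc ` {..<N}" by (simp add: image_Suc_lessThan)
  then show ?thesis unfolding Zs_def by (simp add: sum.reindex)
qed

lemma Zs_lim: "Zs \<longlonglongrightarrow> zt"
proof -
  have "Zs = (\<lambda>N. \<Sum>n<N. 1 / real (Suc n) ^ d)" by (rule ext) (rule Zs_eq)
  then show ?thesis unfolding zt_def using summable_LIMSEQ[OF summ] by simp
qed

lemma Zs_le: "Zs N \<le> zt"
  unfolding zt_def Zs_eq by (rule sum_le_suminf[OF summ]) auto

lemma Zs_split: "G \<le> p \<Longrightarrow> Zs p = Zs G + (\<Sum>g\<in>{Suc G..p}. 1 / real g ^ d)"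
proof -
  assume "G \<le> p"
  then have "{1..p} = {1..G} \<union> {Suc G..p}" by auto
  then show ?thesis unfolding Zs_def by (simp add: sum.union_disjoint)
qed

lemma Zs_head: "G \<ge> 1 \<Longrightarrow> Zs G = 1 + (\<Sum>g\<in>{2..G}. 1 / real g ^ d)"
  unfolding Zs_def by (subst sum.atLeast_Suc_atMost) (auto simp: numeral_2_eq_2)

lemma zt_ge1: "zt \<ge> 1"
  using Zs_le[of 1] Zs_head[of 1] by simp

lemma rr_nn: "rr g p \<ge> 0"
  unfolding rr_def by simp

lemma rr_le: assumes "g \<ge> 1" shows "rr g p \<le> 1 / real g ^ d"
proof (cases "p = 0")
  case True then show ?thesis by (simp add: rr_def)
next
  case False
  have "real (p div g) \<le> real p / real g" by (rule rdiv_le)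
  then have "real (p div g) ^ Suc d \<le> (real p / real g) ^ Suc d" by (intro power_mono) auto
  then have "real g * real (p div g) ^ Suc d / real p ^ Suc d \<le> real g * (real p / real g) ^ Suc d / real p ^ Suc d"
    by (intro divide_right_mono mult_left_mono) auto
  also have "\<dots> = 1 / real g ^ d" using False assms by (simp add: power_divide field_simps)
  finally show ?thesis by (simp add: rr_def)
qed

lemma rr1: "p \<ge> 1 \<Longrightarrow> rr 1 p = 1"
  by (simp add: rr_def)

lemma rr_lim: assumes "g \<ge> 1" shows "(\<lambda>p. rr g p) \<longlonglongrightarrow> 1 / real g ^ d"
proof -
  have q: "(\<lambda>p. real (p div g) / real p) \<longlonglongrightarrow> 1 / real g"
  proof (rule tendsto_sandwich[of "\<lambda>p. 1 / real g - 1 / real p" _ _ "\<lambda>p. 1 / real g"])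
    show "\<forall>\<^sub>F p in sequentially. 1 / real g - 1 / real p \<le> real (p div g) / real p"
      using eventually_gt_at_top[of 0]
    proof eventually_elim
      case (elim p)
      have "real p = real (g * (p div g) + p mod g)" by simp
      also have "\<dots> = real g * real (p div g) + real (p mod g)" by (simp only: of_nat_add of_nat_mult)
      finally have e1: "real p = real g * real (p div g) + real (p mod g)" .
      have "p mod g < g" using assms by simp
      then have "real (p mod g) < real g" by simp
      then have "real p < real g * real (p div g) + real g" using e1 by linarith
      then have "real p / real g - 1 < real (p div g)" using assms by (simp add: field_simps)
      then have "(real p / real g - 1) / real p \<le> real (p div g) / real p"
        using elim by (intro divide_right_mono) auto
      moreover have "(real p / real g - 1) / real p = 1 / real g - 1 / real p"
        using elim assms by (simp add: field_simps)
      ultimately show ?case by simp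
    qed
    show "\<forall>\<^sub>F p in sequentially. real (p div g) / real p \<le> 1 / real g"
      using eventually_gt_at_top[of 0]
    proof eventually_elim
      case (elim p)
      have "real (p div g) \<le> real p / real g" by (rule rdiv_le)
      then have "real (p div g) / real p \<le> real p / real g / real p" using elim by (intro divide_right_mono) auto
      then show ?case using elim by simp
    qed
    show "(\<lambda>p. 1 / real g - 1 / real p) \<longlonglongrightarrow> 1 / real g"
      using tendsto_diff[OF tendsto_const lim_inverse_n'[unfolded inverse_eq_divide]] by simp
  qed simp
  have "(\<lambda>p. real g * (real (p div g) / real p) ^ Suc d) \<longlonglongrightarrow> real g * (1 / real g) ^ Suc d"
    by (intro tendsto_mult tendsto_const tendsto_power q)
  moreover have "real g * (1 / real g) ^ Suc d = 1 / real g ^ d" using assms by (simp add: field_simps)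
  moreover have "(\<lambda>p. rr g p) = (\<lambda>p. real g * (real (p div g) / real p) ^ Suc d)"
    by (rule ext) (simp add: rr_def power_divide)
  ultimately show ?thesis by (simp only:)
qed

lemma RR_le: "RR p \<le> zt"
proof -
  have "RR p \<le> Zs p" unfolding RR_def Zs_def by (rule sum_mono) (rule rr_le, simp)
  then show ?thesis using Zs_le[of p] by simp
qed

lemma RR_lim: "RR \<longlonglongrightarrow> zt"
proof (rule order_tendstoI)
  fix a assume "a > zt"
  then show "\<forall>\<^sub>F p in sequentially. RR p < a"
    by (intro always_eventually allI) (meson RR_le order.strict_trans1)
next
  fix a assume a: "a < zt"
  obtain G where G: "Zs G > a" using order_tendstoD(1)[OF Zs_lim a] by (metis eventually_sequentially order.refl)
  have "(\<lambda>p. \<Sum>g\<in>{1..G}. rr g p) \<longlonglongrightarrow> (\<Sum>g\<in>{1..G}. 1 / real g ^ d)"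
    by (intro tendsto_sum rr_lim) auto
  then have "\<forall>\<^sub>F p in sequentially. (\<Sum>g\<in>{1..G}. rr g p) > a"
    using G unfolding Zs_def by (rule order_tendstoD)
  then show "\<forall>\<^sub>F p in sequentially. a < RR p"
    using eventually_ge_at_top[of G]
  proof eventually_elim
    case (elim p)
    have "(\<Sum>g\<in>{1..G}. rr g p) \<le> RR p" unfolding RR_def
      by (rule sum_mono2) (use elim rr_nn in auto)
    then show ?case using elim by simp
  qed
qed

lemma vv_eq: assumes "p \<ge> 1" shows "vv p = (\<Sum>g\<in>{1..p}. rr g p * ss (p div g))"
proof -
  have "vv p = (\<Sum>g\<in>{1..p}. real g * Wf (p div g) / real p ^ Suc d)"
    unfolding vv_def rel by (simp add: sum_divide_distrib)
  also have "\<dots> = (\<Sum>g\<in>{1..p}. rr g p * ss (p div g))"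
  proof (rule sum.cong[OF refl])
    fix g assume g: "g \<in> {1..p}"
    then have "0 < p div g" by (simp add: div_greater_zero_iff)
    then have "p div g \<ge> 1" by simp
    then have "real (p div g) ^ Suc d \<noteq> 0" by simp
    then show "real g * Wf (p div g) / real p ^ Suc d = rr g p * ss (p div g)"
      by (simp add: rr_def ss_def)
  qed
  finally show ?thesis .
qed

lemma ss_bounded: obtains B where "B \<ge> 0" "\<And>q. \<bar>ss q\<bar> \<le> B"
proof -
  have "Bseq vv" unfolding vv_def using Vlim by (intro convergent_imp_Bseq convergentI)
  then obtain K where K: "K > 0" "\<And>n. norm (vv n) \<le> K" by (auto elim: BseqE)
  have "\<bar>ss q\<bar> \<le> K" for q
  proof (cases "q = 0")
    case True then show ?thesis using K by (simp add: ss_def)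
  next
    case False
    have "Wf q = real 1 * Wf (q div 1)" by simp
    also have "\<dots> \<le> Vf q" unfolding rel
      by (rule member_le_sum[where f = "\<lambda>g. real g * Wf (q div g)"]) (use False Wnn in auto)
    finally have "ss q \<le> vv q" unfolding ss_def vv_def by (intro divide_right_mono) auto
    moreover have "ss q \<ge> 0" unfolding ss_def using Wnn by simp
    ultimately show ?thesis using K(2)[of q] by simp
  qed
  then show ?thesis using that K by (meson less_imp_le)
qed

definition "lam = A / zt"
definition "ee q = ss q - lam"

lemma ee_eq: assumes "p \<ge> 1"
  shows "ee p = (vv p - lam * RR p) - (\<Sum>g\<in>{2..p}. rr g p * ee (p div g))"
proof -
  have "vv p = (\<Sum>g\<in>{1..p}. rr g p * ee (p div g) + lam * rr g p)"
    unfolding vv_eq[OF assms] ee_def by (rule sum.cong) (auto simp: algebra_simps)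
  also have "\<dots> = (\<Sum>g\<in>{1..p}. rr g p * ee (p div g)) + lam * RR p"
    by (simp add: sum.distrib RR_def sum_distrib_left)
  also have "(\<Sum>g\<in>{1..p}. rr g p * ee (p div g)) = rr 1 p * ee (p div 1) + (\<Sum>g\<in>{2..p}. rr g p * ee (p div g))"
    using assms by (subst sum.atLeast_Suc_atMost) (auto simp: numeral_2_eq_2)
  finally show ?thesis using rr1[OF assms] by simp
qed

lemma delta_lim: "(\<lambda>p. vv p - lam * RR p) \<longlonglongrightarrow> 0"
proof -
  have "(\<lambda>p. vv p - lam * RR p) \<longlonglongrightarrow> A - lam * zt"
    unfolding vv_def by (intro tendsto_diff tendsto_mult tendsto_const Vlim RR_lim)
  moreover have "A - lam * zt = 0" using zt_ge1 by (simp add: lam_def)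
  ultimately show ?thesis by simp
qed

lemma contraction:
  assumes Cb: "\<And>q. \<bar>ee q\<bar> \<le> C" and C0: "C \<ge> 0" and beta: "\<beta> \<ge> 0"
    and Q: "\<And>q. q \<ge> Q \<Longrightarrow> \<bar>ee q\<bar> \<le> \<beta>" and eps: "\<epsilon> > 0"
  shows "eventually (\<lambda>p. \<bar>ee p\<bar> \<le> (zt - 1) * \<beta> + \<epsilon>) sequentially"
proof -
  define \<eta> where "\<eta> = \<epsilon> / (2 * (C + 1))"
  have eta: "\<eta> > 0" using eps C0 by (simp add: \<eta>_def)
  have "eventually (\<lambda>N. Zs N > zt - \<eta>) sequentially"
    by (rule order_tendstoD(1)[OF Zs_lim]) (use eta in simp)
  then obtain N0 where N0: "\<And>N. N \<ge> N0 \<Longrightarrow> Zs N > zt - \<eta>" by (auto simp: eventually_sequentially)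
  define G where "G = max N0 1"
  have G1: "G \<ge> 1" by (simp add: G_def)
  have "Zs G > zt - \<eta>" using N0 by (simp add: G_def)
  then have x: "zt - Zs G < \<eta>" by simp
  have x0: "zt - Zs G \<ge> 0" using Zs_le[of G] by simp
  have "C * (zt - Zs G) \<le> (C + 1) * (zt - Zs G)" using x0 by (simp add: algebra_simps)
  also have "\<dots> \<le> (C + 1) * \<eta>" using x C0 by (intro mult_left_mono) auto
  also have "\<dots> = \<epsilon> / 2"
  proof -
    have "C + 1 \<noteq> 0" using C0 by simp
    then show ?thesis by (simp add: \<eta>_def field_simps)
  qed
  finally have GZ: "C * (zt - Zs G) \<le> \<epsilon> / 2" .
  have D: "eventually (\<lambda>p. dist (vv p - lam * RR p) 0 < \<epsilon> / 2) sequentially"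
    by (rule tendstoD[OF delta_lim]) (use eps in simp)
  show ?thesis
    using D eventually_ge_at_top[of "max (G * Q) G + 1"]
  proof eventually_elim
    case (elim p)
    have p1: "p \<ge> 1" and pG: "p \<ge> G" and pGQ: "p \<ge> G * Q" using elim by auto
    have del: "\<bar>vv p - lam * RR p\<bar> < \<epsilon> / 2" using elim by (simp add: dist_real_def)
    let ?f = "\<lambda>g. 1 / real g ^ d"
    have tm: "\<bar>rr g p * ee (p div g)\<bar> \<le> (if g \<le> G then ?f g * \<beta> else ?f g * C)"
      if g: "g \<in> {2..p}" for g
    proof -
      have "\<bar>rr g p * ee (p div g)\<bar> = rr g p * \<bar>ee (p div g)\<bar>" using rr_nn by (simp add: abs_mult)
      also have "\<dots> \<le> ?f g * \<bar>ee (p div g)\<bar>" using rr_le[of g p] g by (intro mult_right_mono) auto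
      also have "\<dots> \<le> (if g \<le> G then ?f g * \<beta> else ?f g * C)"
      proof (cases "g \<le> G")
        case True
        have "Q = (G * Q) div G" using G1 by simp
        also have "\<dots> \<le> p div G" using pGQ by (rule div_le_mono)
        also have "\<dots> \<le> p div g" using True g by (intro div_le_mono2) auto
        finally have "\<bar>ee (p div g)\<bar> \<le> \<beta>" by (rule Q)
        then show ?thesis using True by (simp add: divide_right_mono)
      next
        case False
        then show ?thesis using Cb[of "p div g"] by (simp add: divide_right_mono)
      qed
      finally show ?thesis .
    qed
    have "\<bar>\<Sum>g\<in>{2..p}. rr g p * ee (p div g)\<bar> \<le> (\<Sum>g\<in>{2..p}. \<bar>rr g p * ee (p div g)\<bar>)"
      by (rule sum_abs)
    also have "\<dots> \<le> (\<Sum>g\<in>{2..p}. (if g \<le> G then ?f g * \<beta> else ?f g * C))"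
      by (rule sum_mono) (rule tm)
    also have "\<dots> = (\<Sum>g\<in>{2..G}. ?f g * \<beta>) + (\<Sum>g\<in>{Suc G..p}. ?f g * C)"
    proof -
      have "{2..p} = {2..G} \<union> {Suc G..p}" using pG G1 by auto
      then have "(\<Sum>g\<in>{2..p}. (if g \<le> G then ?f g * \<beta> else ?f g * C))
          = (\<Sum>g\<in>{2..G}. (if g \<le> G then ?f g * \<beta> else ?f g * C)) + (\<Sum>g\<in>{Suc G..p}. (if g \<le> G then ?f g * \<beta> else ?f g * C))"
        by (simp add: sum.union_disjoint)
      then show ?thesis by simp
    qed
    also have "\<dots> = \<beta> * (Zs G - 1) + C * (Zs p - Zs G)"
      using Zs_head[OF G1] Zs_split[OF pG] by (simp add: sum_distrib_left mult.commute)
    also have "\<dots> \<le> \<beta> * (zt - 1) + C * (zt - Zs G)"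
      using Zs_le[of G] Zs_le[of p] beta C0 by (intro add_mono mult_left_mono) auto
    finally have S: "\<bar>\<Sum>g\<in>{2..p}. rr g p * ee (p div g)\<bar> \<le> \<beta> * (zt - 1) + \<epsilon> / 2" using GZ by simp
    have "\<bar>ee p\<bar> \<le> \<bar>vv p - lam * RR p\<bar> + \<bar>\<Sum>g\<in>{2..p}. rr g p * ee (p div g)\<bar>"
      unfolding ee_eq[OF p1] by (rule abs_triangle_ineq4)
    then show ?case using del S by (simp add: mult.commute)
  qed
qed

lemma ee_iter:
  assumes Cb: "\<And>q. \<bar>ee q\<bar> \<le> C" and C0: "C \<ge> 0"
  shows "\<forall>\<epsilon>>0. eventually (\<lambda>p. \<bar>ee p\<bar> \<le> (zt - 1) ^ n * C + \<epsilon>) sequentially"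
proof (induction n)
  case 0
  show ?case using Cb by (auto intro!: always_eventually simp: add_increasing2)
next
  case (Suc n)
  have th0: "zt - 1 \<ge> 0" using zt_ge1 by simp
  have th1: "zt - 1 \<le> 1" using zlt by (simp add: zt_def)
  show ?case
  proof (intro allI impI)
    fix \<epsilon> :: real assume eps: "\<epsilon> > 0"
    have "eventually (\<lambda>p. \<bar>ee p\<bar> \<le> (zt - 1) ^ n * C + \<epsilon> / 2) sequentially"
      using Suc eps by simp
    then obtain Q where Q: "\<And>q. q \<ge> Q \<Longrightarrow> \<bar>ee q\<bar> \<le> (zt - 1) ^ n * C + \<epsilon> / 2"
      by (auto simp: eventually_sequentially)
    have b0: "(zt - 1) ^ n * C + \<epsilon> / 2 \<ge> 0" using th0 C0 eps by simp
    have "eventually (\<lambda>p. \<bar>ee p\<bar> \<le> (zt - 1) * ((zt - 1) ^ n * C + \<epsilon> / 2) + \<epsilon> / 2) sequentially"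
      by (rule contraction[OF Cb C0 b0 Q]) (use eps in auto)
    then show "eventually (\<lambda>p. \<bar>ee p\<bar> \<le> (zt - 1) ^ Suc n * C + \<epsilon>) sequentially"
    proof (rule eventually_mono)
      fix p assume "\<bar>ee p\<bar> \<le> (zt - 1) * ((zt - 1) ^ n * C + \<epsilon> / 2) + \<epsilon> / 2"
      moreover have "(zt - 1) * (\<epsilon> / 2) \<le> \<epsilon> / 2" using th1 eps by (simp add: mult_left_le_one_le th0)
      moreover have "(zt - 1) * ((zt - 1) ^ n * C + \<epsilon> / 2) + \<epsilon> / 2 = (zt - 1) ^ Suc n * C + (zt - 1) * (\<epsilon> / 2) + \<epsilon> / 2"
        by (simp add: algebra_simps)
      ultimately show "\<bar>ee p\<bar> \<le> (zt - 1) ^ Suc n * C + \<epsilon>" by linarith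
    qed
  qed
qed

lemma ss_lim: "ss \<longlonglongrightarrow> lam"
proof -
  obtain B where B: "B \<ge> 0" "\<And>q. \<bar>ss q\<bar> \<le> B" using ss_bounded by blast
  define C where "C = B + \<bar>lam\<bar>"
  have C0: "C \<ge> 0" using B by (simp add: C_def)
  have Cb: "\<bar>ee q\<bar> \<le> C" for q using B(2)[of q] by (simp add: ee_def C_def)
  have th0: "zt - 1 \<ge> 0" using zt_ge1 by simp
  have th1: "zt - 1 < 1" using zlt by (simp add: zt_def)
  have "ee \<longlonglongrightarrow> 0"
  proof (rule tendstoI)
    fix \<epsilon> :: real assume eps: "\<epsilon> > 0"
    have "(\<lambda>n. (zt - 1) ^ n * C) \<longlonglongrightarrow> 0 * C"
      by (intro tendsto_mult tendsto_const LIMSEQ_power_zero) (use th0 th1 in simp)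
    then have "eventually (\<lambda>n. (zt - 1) ^ n * C < \<epsilon> / 2) sequentially"
      by (rule order_tendstoD) (use eps in simp)
    then obtain n where n: "(zt - 1) ^ n * C < \<epsilon> / 2" by (auto simp: eventually_sequentially)
    have "eventually (\<lambda>p. \<bar>ee p\<bar> \<le> (zt - 1) ^ n * C + \<epsilon> / 4) sequentially"
      using ee_iter[OF Cb C0, of n] eps by simp
    then show "eventually (\<lambda>p. dist (ee p) 0 < \<epsilon>) sequentially"
      by (rule eventually_mono) (use n eps in auto)
  qed
  then have "(\<lambda>p. ee p + lam) \<longlonglongrightarrow> 0 + lam" by (intro tendsto_add tendsto_const)
  then show ?thesis by (simp add: ee_def)
qed

lemma W_limit: "(\<lambda>p. Wf p / real p ^ Suc d) \<longlonglongrightarrow> A / suminf (\<lambda>n. 1 / real (Suc n) ^ d)"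
  using ss_lim unfolding ss_def lam_def zt_def by (simp add: fun_eq_iff)

end



lemma summ_d: "d \<ge> 2 \<Longrightarrow> summable (\<lambda>n. 1 / real (Suc n) ^ d)"
proof -
  assume "d \<ge> 2"
  then have "summable (\<lambda>n. inverse (real n ^ d))" using inverse_power_summable[of d] by simp
  then have "summable (\<lambda>n. inverse (real (Suc n) ^ d))" by (subst summable_Suc_iff)
  then show ?thesis by (simp add: inverse_eq_divide)
qed

lemma zeta_lt2: assumes "d \<ge> 3" shows "suminf (\<lambda>n. 1 / real (Suc n) ^ d) < 2"
proof -
  have s: "summable (\<lambda>n. 1 / real (Suc n) ^ d)" using assms by (intro summ_d) simp
  let ?a = "\<lambda>n. 1 / (2 * (real n + 1))"
  have a0: "?a \<longlonglongrightarrow> 0"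
  proof -
    have "(\<lambda>n. 1 / (2 * (real n + 1))) = (\<lambda>n. (1/2) * inverse (real (Suc n)))"
      by (rule ext) (simp add: field_simps)
    moreover have "(\<lambda>n. (1/2::real) * inverse (real (Suc n))) \<longlonglongrightarrow> (1/2) * 0"
      by (intro tendsto_mult tendsto_const LIMSEQ_inverse_real_of_nat)
    ultimately show ?thesis by simp
  qed
  have tel: "(\<lambda>n. ?a n - ?a (Suc n)) sums (?a 0 - 0)" by (rule telescope_sums'[OF a0])
  have le: "1 / real (Suc (Suc n)) ^ d \<le> ?a n - ?a (Suc n)" for n
  proof -
    let ?m = "real n + 2"
    have m1: "?m \<ge> 1" by simp
    have eqA: "?a n - ?a (Suc n) = 1 / (2 * (real n + 1) * ?m)"
      by (simp add: divide_simps)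
    have bnd: "2 * (real n + 1) * ?m \<le> ?m ^ d"
    proof -
      have "2 * (real n + 1) * ?m \<le> ?m ^ 2 * ?m" by (intro mult_right_mono) (auto simp: power2_eq_square algebra_simps)
      also have "\<dots> = ?m ^ 3" by (simp add: power_Suc2 numeral_3_eq_3 numeral_2_eq_2)
      also have "\<dots> \<le> ?m ^ d" by (rule power_increasing[OF assms m1])
      finally show ?thesis .
    qed
    have r: "real (Suc (Suc n)) = ?m" by simp
    have pos: "0 < 2 * (real n + 1) * ?m" by simp
    have "1 / ?m ^ d \<le> 1 / (2 * (real n + 1) * ?m)"
      by (rule divide_left_mono[OF bnd]) (use pos in auto)
    then show ?thesis unfolding r eqA .
  qed
  have "(\<Sum>n. 1 / real (Suc (Suc n)) ^ d) \<le> ?a 0 - 0"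
  proof -
    have s2: "summable (\<lambda>n. 1 / real (Suc (Suc n)) ^ d)"
      using summable_Suc_iff[of "\<lambda>n. 1 / real (Suc n) ^ d", THEN iffD2, OF s] by simp
    show ?thesis by (rule sums_le[OF le summable_sums[OF s2] tel])
  qed
  moreover have "(\<Sum>n. 1 / real (Suc (Suc n)) ^ d) = suminf (\<lambda>n. 1 / real (Suc n) ^ d) - 1"
    using suminf_split_head[OF s] by simp
  ultimately show ?thesis by simp
qed

definition "Aconst d = (2::real) ^ d / fact d - 2 ^ d / fact d / real (Suc d)"
definition "zt_d d = suminf (\<lambda>n. 1 / real (Suc n) ^ d)"

lemma kappa_W: "d > 0 \<Longrightarrow> real_of_int (kappa d p) = W d p / (2 * real d)"
proof -
  assume d: "d > 0"
  have "real_of_int (2 * int d * kappa d p) = real_of_int (\<Sum>x\<in>PB d p. l1norm d x)"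
    using kappa_eq[OF d] by simp
  then have "2 * real d * real_of_int (kappa d p) = W d p" by (simp add: W_def)
  then show ?thesis using d by (simp add: field_simps)
qed

lemma kappa_limit:
  assumes "d \<ge> 3"
  shows "(\<lambda>p. real_of_int (kappa d p) / real p ^ Suc d) \<longlonglongrightarrow> Aconst d / zt_d d / (2 * real d)"
proof -
  have d0: "d > 0" using assms by simp
  have "(\<lambda>p. W d p / real p ^ Suc d) \<longlonglongrightarrow> Aconst d / zt_d d"
    unfolding zt_d_def Aconst_def
  proof (rule W_limit)
    show "\<And>p. Vsum d p = (\<Sum>g\<in>{1..p}. real g * W d (p div g))" by (rule Vsum_W[OF d0])
    show "\<And>p. 0 \<le> W d p" by (simp add: W_def sum_nonneg l1norm_nonneg)
    show "(\<lambda>p. Vsum d p / real p ^ Suc d) \<longlonglongrightarrow> 2 ^ d / fact d - 2 ^ d / fact d / real (Suc d)"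
      by (rule Vsum_limit)
    show "summable (\<lambda>n. 1 / real (Suc n) ^ d)" using assms by (intro summ_d) simp
    show "(\<Sum>n. 1 / real (Suc n) ^ d) < 2" using assms by (rule zeta_lt2)
  qed
  then have "(\<lambda>p. W d p / real p ^ Suc d / (2 * real d)) \<longlonglongrightarrow> Aconst d / zt_d d / (2 * real d)"
    by (rule tendsto_divide[OF _ tendsto_const]) (use d0 in auto)
  moreover have "W d p / real p ^ Suc d / (2 * real d) = real_of_int (kappa d p) / real p ^ Suc d" for p
    using kappa_W[OF d0, of p] by simp
  ultimately show ?thesis by simp
qed



definition "Sn d p = (\<Sum>x\<in>PB d p. l1norm d x)"

lemma PB_mono: "p \<le> p' \<Longrightarrow> PB d p \<subseteq> PB d p'"
  unfolding PB_def using ball1_mono by blast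

lemma Sn_mono: "p \<le> p' \<Longrightarrow> Sn d p \<le> Sn d p'"
  unfolding Sn_def by (rule sum_mono2[OF finite_PB PB_mono]) (auto simp: l1norm_nonneg)

lemma kappa_mono: "d > 0 \<Longrightarrow> p \<le> p' \<Longrightarrow> kappa d p \<le> kappa d p'"
proof -
  assume d: "d > 0" and pp: "p \<le> p'"
  have "2 * int d * kappa d p \<le> 2 * int d * kappa d p'"
    using kappa_eq[OF d, of p] kappa_eq[OF d, of p'] Sn_mono[OF pp, of d] by (simp add: Sn_def)
  then show ?thesis using d by simp
qed

lemma kappa_nonneg: "d > 0 \<Longrightarrow> kappa d p \<ge> 0"
proof -
  assume d: "d > 0"
  have "0 \<le> Sn d p" unfolding Sn_def by (simp add: sum_nonneg l1norm_nonneg)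
  then have "0 \<le> 2 * int d * kappa d p" using kappa_eq[OF d, of p] by (simp add: Sn_def)
  then show ?thesis using d by (simp add: zero_le_mult_iff)
qed

definition vv2 :: "nat \<Rightarrow> int \<Rightarrow> int \<Rightarrow> nat \<Rightarrow> nat \<Rightarrow> int" where
  "vv2 p s t j = (\<lambda>i. if i = 0 then s * (int p - 1) else if i = j then t else 0)"

lemma l1norm_vv2:
  assumes "0 < j" "j < d"
  shows "l1norm d (vv2 p s t j) = \<bar>s * (int p - 1)\<bar> + \<bar>t\<bar>"
proof -
  have "\<bar>vv2 p s t j i\<bar> = (if i = 0 then \<bar>s * (int p - 1)\<bar> else 0) + (if i = j then \<bar>t\<bar> else 0)" for i
    using assms by (auto simp: vv2_def)
  then have "l1norm d (vv2 p s t j) = (\<Sum>i<d. (if i = 0 then \<bar>s * (int p - 1)\<bar> else 0)) + (\<Sum>i<d. (if i = j then \<bar>t\<bar> else 0))"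
    unfolding l1norm_def by (simp add: sum.distrib)
  also have "\<dots> = \<bar>s * (int p - 1)\<bar> + \<bar>t\<bar>" using assms by simp
  finally show ?thesis .
qed

lemma vv2_in:
  assumes "0 < j" "j < d" "s \<in> {1, -1}" "t \<in> {1, -1}" "p \<ge> 1"
  shows "vv2 p s t j \<in> PB d p - PB d (p - 1)"
proof -
  have n: "l1norm d (vv2 p s t j) = int p" using l1norm_vv2[OF assms(1,2)] assms(3-5) by (auto simp: abs_mult)
  have lat: "vv2 p s t j \<in> lattice_pts d" using assms by (auto simp: lattice_pts_def vv2_def)
  have "t \<in> vv2 p s t j ` {..<d}" using assms by (auto simp: vv2_def image_iff intro!: bexI[of _ j])
  then have "Gcd (vv2 p s t j ` {..<d}) dvd t" by (rule Gcd_dvd)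
  then have "Gcd (vv2 p s t j ` {..<d}) dvd 1" using assms(4) by auto
  then have "Gcd (vv2 p s t j ` {..<d}) = 1" using Gcd_int_greater_eq_0 by (simp add: zdvd1_eq)
  then have "primitive d (vv2 p s t j)" using lat by (simp add: primitive_def)
  then show ?thesis using n lat assms(5) by (auto simp: PB_def ball1_def)
qed

lemma vv2_inj:
  assumes "p \<ge> 2"
  shows "inj_on (\<lambda>(s, t, j). vv2 p s t j) ({1, -1} \<times> {1, -1} \<times> {1, 2})"
proof (rule inj_onI)
  fix x y
  assume mx: "x \<in> {1, -1} \<times> {1, -1} \<times> {1::nat, 2}" and my: "y \<in> {1, -1} \<times> {1, -1} \<times> {1::nat, 2}"
    and e0: "(\<lambda>(s, t, j). vv2 p s t j) x = (\<lambda>(s, t, j). vv2 p s t j) y"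
  obtain s t j where x: "x = (s, t, j)" by (cases x) auto
  obtain s' t' j' where y: "y = (s', t', j')" by (cases y) auto
  have m: "(s, t, j) \<in> {1, -1} \<times> {1, -1} \<times> {1::nat, 2}" "(s', t', j') \<in> {1, -1} \<times> {1, -1} \<times> {1::nat, 2}"
    using mx my x y by auto
  have e: "vv2 p s t j = vv2 p s' t' j'" using e0 x y by simp
  have pp: "int p - 1 \<noteq> 0" using assms by simp
  have "s * (int p - 1) = s' * (int p - 1)" using fun_cong[OF e, of 0] by (simp add: vv2_def)
  then have ss: "s = s'" using pp by simp
  have "vv2 p s t j j = vv2 p s' t' j' j" using e by simp
  then have jj: "j = j'" using m by (auto simp: vv2_def split: if_splits)
  have "vv2 p s t j j = vv2 p s' t' j' j" using e by simp
  then have "t = t'" using m jj by (auto simp: vv2_def)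
  then show "x = y" using ss jj x y by simp
qed

lemma Sn_jump:
  assumes "d \<ge> 3" "p \<ge> 2"
  shows "Sn d p - Sn d (p - 1) \<ge> 8 * int p"
proof -
  define F where "F = (\<lambda>(s, t, j). vv2 p s t j) ` ({1, -1} \<times> {1, -1} \<times> {1::nat, 2})"
  have cF: "card F = 8"
    unfolding F_def using card_image[OF vv2_inj[OF assms(2)]] by simp
  have FS: "F \<subseteq> PB d p - PB d (p - 1)"
    unfolding F_def using vv2_in assms by auto
  have nF: "x \<in> PB d p - PB d (p - 1) \<Longrightarrow> l1norm d x = int p" for x
    using assms by (auto simp: PB_def ball1_def)
  have "Sn d p = Sn d (p - 1) + (\<Sum>x\<in>PB d p - PB d (p - 1). l1norm d x)"
  proof -
    have "PB d (p - 1) \<subseteq> PB d p" by (rule PB_mono) simp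
    then show ?thesis unfolding Sn_def using finite_PB sum.subset_diff[of "PB d (p - 1)" "PB d p" "l1norm d"]
      by (simp add: add.commute)
  qed
  moreover have "(\<Sum>x\<in>PB d p - PB d (p - 1). l1norm d x) \<ge> (\<Sum>x\<in>F. l1norm d x)"
    by (rule sum_mono2) (use FS finite_PB l1norm_nonneg in auto)
  moreover have "(\<Sum>x\<in>F. l1norm d x) = 8 * int p"
  proof -
    have "(\<Sum>x\<in>F. l1norm d x) = (\<Sum>x\<in>F. int p)" by (rule sum.cong) (use nF FS in auto)
    then show ?thesis using cF by simp
  qed
  ultimately show ?thesis by simp
qed

lemma kappa_jump:
  assumes "d \<ge> 3" "q \<ge> 1"
  shows "kappa d (d * q) - kappa d (d * q - 1) \<ge> 4 * int q"
proof -
  have d0: "d > 0" using assms by simp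
  have "3 * 1 \<le> d * q" by (rule mult_le_mono[OF assms])
  then have p2: "d * q \<ge> 2" by simp
  have "2 * int d * (kappa d (d * q) - kappa d (d * q - 1)) = Sn d (d * q) - Sn d (d * q - 1)"
    using kappa_eq[OF d0, of "d*q"] kappa_eq[OF d0, of "d*q - 1"] by (simp add: Sn_def algebra_simps)
  also have "\<dots> \<ge> 8 * int (d * q)" by (rule Sn_jump[OF assms(1) p2])
  finally have "2 * int d * (4 * int q) \<le> 2 * int d * (kappa d (d * q) - kappa d (d * q - 1))" by (simp add: algebra_simps)
  then show ?thesis using d0 by simp
qed



lemma A1: fixes x::real assumes "x > 0" "m > 0" shows "(x ^ m) powr (1 / real m) = x"
proof -
  have "(x ^ m) powr (1/real m) = (x powr real m) powr (1/real m)" using assms by (simp add: powr_realpow)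
  also have "\<dots> = x powr (real m * (1/real m))" by (rule powr_powr)
  also have "\<dots> = x" using assms by simp
  finally show ?thesis .
qed

lemma A2: fixes U n e ::real assumes "U > 0" "n > 0" "(n ^ m) powr e = n" shows "(U / n ^ m) powr e = U powr e / n"
  using assms by (simp add: powr_divide)

lemma A3: fixes a U n ::real assumes "U > 0" "n > 0" shows "a / n / (U / n) = a / U"
  using assms by simp

lemma ratio_lim:
  fixes u :: "nat \<Rightarrow> int" and a :: "nat \<Rightarrow> real"
  assumes lim: "(\<lambda>n. real_of_int (u n) / real n ^ m) \<longlonglongrightarrow> c" and c: "c > 0" and m: "m > 0"
    and al: "(\<lambda>n. a n / real n) \<longlonglongrightarrow> 1"
  shows "(\<lambda>n. a n / real_of_int (u n) powr (1 / real m)) \<longlonglongrightarrow> 1 / c powr (1 / real m)"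
proof -
  let ?e = "1 / real m"
  have L: "(\<lambda>n. (a n / real n) / (real_of_int (u n) / real n ^ m) powr ?e) \<longlonglongrightarrow> 1 / c powr ?e"
    by (intro tendsto_divide al tendsto_powr lim tendsto_const) (use c in auto)
  have pos: "eventually (\<lambda>n. real_of_int (u n) / real n ^ m > 0) sequentially"
    by (rule order_tendstoD(1)[OF lim c])
  have "eventually (\<lambda>n. (a n / real n) / (real_of_int (u n) / real n ^ m) powr ?e = a n / real_of_int (u n) powr ?e) sequentially"
    using pos eventually_gt_at_top[of 0]
  proof eventually_elim
    case (elim n)
    have n0: "real n > 0" using elim by simp
    then have un: "real_of_int (u n) > 0" using elim by (simp add: zero_less_divide_iff)
    have "(real n ^ m) powr ?e = real n" by (rule A1[OF n0 m])
    then have "(real_of_int (u n) / real n ^ m) powr ?e = real_of_int (u n) powr ?e / real n"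
      by (rule A2[OF un n0])
    moreover have "real_of_int (u n) powr ?e > 0" using un by simp
    ultimately show ?case using A3[OF _ n0, of "real_of_int (u n) powr ?e" "a n"] by (simp only:)
  qed
  then show ?thesis by (rule Lim_transform_eventually[OF L])
qed

lemma count_asym:
  fixes u :: "nat \<Rightarrow> int" and c :: real
  assumes mono: "\<And>q q'. 2 \<le> q \<Longrightarrow> q < q' \<Longrightarrow> u q < u q'"
    and lim: "(\<lambda>q. real_of_int (u q) / real q ^ m) \<longlonglongrightarrow> c" and c: "c > 0" and m: "m > 0"
  shows "(\<lambda>k. real (card {q. 2 \<le> q \<and> u q \<le> int k}) / real k powr (1 / real m)) \<longlonglongrightarrow> 1 / c powr (1 / real m)"
proof -
  let ?e = "1 / real m"
  let ?L = "1 / c powr ?e"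
  have grow: "u (2 + i) \<ge> u 2 + int i" for i
  proof (induction i)
    case (Suc i)
    have "u (2 + i) < u (2 + Suc i)" by (rule mono) auto
    then show ?case using Suc by simp
  qed simp
  have ex: "\<exists>n. 2 \<le> n \<and> u n > int k" for k
  proof -
    have "u (2 + nat (int k - u 2 + 1)) \<ge> u 2 + int (nat (int k - u 2 + 1))" by (rule grow)
    moreover have "int (nat (int k - u 2 + 1)) \<ge> int k - u 2 + 1" by simp
    ultimately have "u (2 + nat (int k - u 2 + 1)) > int k" by linarith
    then show ?thesis by (intro exI[of _ "2 + nat (int k - u 2 + 1)"]) simp
  qed
  define nn where "nn k = (LEAST n. 2 \<le> n \<and> u n > int k)" for k
  have nn1: "2 \<le> nn k \<and> u (nn k) > int k" for k
    unfolding nn_def by (rule LeastI_ex[OF ex])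
  have nn2: "u n \<le> int k" if "2 \<le> n" "n < nn k" for n k
  proof -
    have "\<not> (2 \<le> n \<and> u n > int k)"
      using not_less_Least[of n "\<lambda>n. 2 \<le> n \<and> u n > int k"] that(2) unfolding nn_def by blast
    then show ?thesis using that(1) by simp
  qed
  have mle: "u a \<le> u b" if "2 \<le> a" "a \<le> b" for a b
  proof (cases "a = b")
    case False
    then have "a < b" using that by simp
    then show ?thesis using mono[OF that(1)] by (simp add: less_imp_le)
  qed simp
  have setq: "{q. 2 \<le> q \<and> u q \<le> int k} = {2..<nn k}" for k
  proof (intro equalityI subsetI)
    fix q assume q: "q \<in> {q. 2 \<le> q \<and> u q \<le> int k}"
    have "q < nn k"
    proof (rule ccontr)
      assume "\<not> q < nn k"
      then have "u (nn k) \<le> u q" using mle[of "nn k" q] nn1[of k] by simp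
      then show False using q nn1[of k] by simp
    qed
    then show "q \<in> {2..<nn k}" using q by simp
  next
    fix q assume "q \<in> {2..<nn k}"
    then show "q \<in> {q. 2 \<le> q \<and> u q \<le> int k}" using nn2 by auto
  qed
  have card_eq: "real (card {q. 2 \<le> q \<and> u q \<le> int k}) = real (nn k) - 2" for k
    unfolding setq using nn1[of k] by (simp add: of_nat_diff)
  have nn_top: "filterlim nn at_top sequentially"
  proof (subst filterlim_at_top, intro allI)
    fix Z :: nat
    define Z' where "Z' = max Z 2"
    show "eventually (\<lambda>k. Z \<le> nn k) sequentially"
      using eventually_ge_at_top[of "nat (u Z')"]
    proof eventually_elim
      case (elim k)
      have "\<not> nn k \<le> Z'"
      proof
        assume a: "nn k \<le> Z'"
        have "u (nn k) \<le> u Z'" using mle[of "nn k" Z'] nn1[of k] a by simp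
        then show False using nn1[of k] elim by linarith
      qed
      then show ?case by (simp add: Z'_def)
    qed
  qed
  have phi: "(\<lambda>n. (real n - 2) / real_of_int (u n) powr ?e) \<longlonglongrightarrow> ?L"
  proof (rule ratio_lim[OF lim c m])
    have "(\<lambda>n. 1 - 2 * (1 / real n)) \<longlonglongrightarrow> 1 - 2 * 0"
      by (intro tendsto_diff tendsto_mult tendsto_const lim_inverse_n'[unfolded inverse_eq_divide])
    moreover have "eventually (\<lambda>n. 1 - 2 * (1 / real n) = (real n - 2) / real n) sequentially"
      using eventually_gt_at_top[of 0] by eventually_elim (simp add: field_simps)
    ultimately show "(\<lambda>n. (real n - 2) / real n) \<longlonglongrightarrow> 1" by (simp add: Lim_transform_eventually)
  qed
  have psi: "(\<lambda>n. (real n - 2) / real_of_int (u (n - 1)) powr ?e) \<longlonglongrightarrow> ?L"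
  proof (rule LIMSEQ_imp_Suc)
    have "(\<lambda>n. (real n - 1) / real_of_int (u n) powr ?e) \<longlonglongrightarrow> ?L"
    proof (rule ratio_lim[OF lim c m])
      have "(\<lambda>n. 1 - 1 / real n) \<longlonglongrightarrow> 1 - 0"
        by (intro tendsto_diff tendsto_const lim_inverse_n'[unfolded inverse_eq_divide])
      moreover have "eventually (\<lambda>n. 1 - 1 / real n = (real n - 1) / real n) sequentially"
        using eventually_gt_at_top[of 0] by eventually_elim (simp add: field_simps)
      ultimately show "(\<lambda>n. (real n - 1) / real n) \<longlonglongrightarrow> 1" by (simp add: Lim_transform_eventually)
    qed
    then show "(\<lambda>n. (real (Suc n) - 2) / real_of_int (u (Suc n - 1)) powr ?e) \<longlonglongrightarrow> ?L"
      by simp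
  qed
  have A: "(\<lambda>k. (real (nn k) - 2) / real_of_int (u (nn k)) powr ?e) \<longlonglongrightarrow> ?L"
    using filterlim_compose[OF phi nn_top] by (simp add: comp_def)
  have B: "(\<lambda>k. (real (nn k) - 2) / real_of_int (u (nn k - 1)) powr ?e) \<longlonglongrightarrow> ?L"
    using filterlim_compose[OF psi nn_top] by (simp add: comp_def)
  have upos: "eventually (\<lambda>n. real_of_int (u n) > 0) sequentially"
  proof -
    have "eventually (\<lambda>n. real_of_int (u n) / real n ^ m > 0) sequentially"
      by (rule order_tendstoD(1)[OF lim c])
    then show ?thesis using eventually_gt_at_top[of 0]
      by eventually_elim (simp add: zero_less_divide_iff)
  qed
  then obtain N0 where N0: "\<And>n. n \<ge> N0 \<Longrightarrow> real_of_int (u n) > 0" by (auto simp: eventually_sequentially)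
  have ev: "eventually (\<lambda>k. nn k \<ge> N0 + 3) sequentially"
    using nn_top by (simp add: filterlim_at_top)
  show ?thesis
  proof (rule tendsto_sandwich[OF _ _ A B])
    show "eventually (\<lambda>k. (real (nn k) - 2) / real_of_int (u (nn k)) powr ?e
        \<le> real (card {q. 2 \<le> q \<and> u q \<le> int k}) / real k powr ?e) sequentially"
      using ev eventually_gt_at_top[of 0]
    proof eventually_elim
      case (elim k)
      have k0: "real k powr ?e > 0" using elim by simp
      have "real k powr ?e \<le> real_of_int (u (nn k)) powr ?e"
        using nn1[of k] by (intro powr_mono2) auto
      moreover have "real (nn k) - 2 \<ge> 0" using nn1[of k] by simp
      moreover have "real_of_int (u (nn k)) > 0" using nn1[of k] by linarith
      then have "real_of_int (u (nn k)) powr ?e > 0" by simp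
      ultimately show ?case unfolding card_eq using k0 by (intro divide_left_mono) auto
    qed
    show "eventually (\<lambda>k. real (card {q. 2 \<le> q \<and> u q \<le> int k}) / real k powr ?e
        \<le> (real (nn k) - 2) / real_of_int (u (nn k - 1)) powr ?e) sequentially"
      using ev
    proof eventually_elim
      case (elim k)
      have up: "real_of_int (u (nn k - 1)) > 0" using N0 elim by simp
      have "u (nn k - 1) \<le> int k" using elim by (intro nn2) auto
      then have "real_of_int (u (nn k - 1)) powr ?e \<le> real k powr ?e"
        using up by (intro powr_mono2) auto
      moreover have "real (nn k) - 2 \<ge> 0" using nn1[of k] by simp
      moreover have "real_of_int (u (nn k - 1)) powr ?e > 0" using up by simp
      moreover have "real k powr ?e > 0" using up \<open>u (nn k - 1) \<le> int k\<close> by simp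
      ultimately show ?case unfolding card_eq by (intro divide_left_mono) auto
    qed
  qed
qed



context
  fixes d :: nat
  assumes d3: "d \<ge> 3"
begin

definition "al q = kappa d (d * q - 1) + int q"
definition "be q = kappa d (d * q) - int q"

lemma d0: "d > 0" using d3 by simp

lemma al_ge: "al q \<ge> int q"
  unfolding al_def using kappa_nonneg[OF d0] by simp

lemma be_ge: "q \<ge> 1 \<Longrightarrow> be q \<ge> kappa d (d * q - 1) + 3 * int q"
  unfolding be_def using kappa_jump[OF d3, of q] by simp

lemma al_mono: "q < q' \<Longrightarrow> al q < al q'"
proof -
  assume "q < q'"
  then have "d * q - 1 \<le> d * q' - 1" by (simp add: diff_le_mono)
  then have "kappa d (d * q - 1) \<le> kappa d (d * q' - 1)" by (rule kappa_mono[OF d0])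
  then show ?thesis using \<open>q < q'\<close> by (simp add: al_def)
qed

lemma dq_le: "q < q' \<Longrightarrow> d * q \<le> d * q' - 1"
proof -
  assume "q < q'"
  then have "d * Suc q \<le> d * q'" by (intro mult_le_mono2) simp
  then have "d * q + d \<le> d * q'" by simp
  then show ?thesis using d0 by linarith
qed

lemma be_mono: "q < q' \<Longrightarrow> be q < be q'"
proof -
  assume qq: "q < q'"
  have "kappa d (d * q) \<le> kappa d (d * q' - 1)" by (rule kappa_mono[OF d0 dq_le[OF qq]])
  moreover have "be q' \<ge> kappa d (d * q' - 1) + 3 * int q'" using qq by (intro be_ge) simp
  ultimately show ?thesis using qq by (simp add: be_def)
qed

lemma al_be_disj: "q \<ge> 1 \<Longrightarrow> q' \<ge> 1 \<Longrightarrow> al q \<noteq> be q'"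
proof -
  assume q: "q \<ge> 1" and q': "q' \<ge> 1"
  show ?thesis
  proof (cases "q \<le> q'")
    case True
    have "al q \<le> al q'" using al_mono[of q q'] True by (cases "q = q'") auto
    also have "al q' < be q'" using be_ge[OF q'] q' by (simp add: al_def)
    finally show ?thesis by simp
  next
    case False
    then have "q' < q" by simp
    have "be q' < kappa d (d * q')" using q' by (simp add: be_def)
    also have "\<dots> \<le> kappa d (d * q - 1)" by (rule kappa_mono[OF d0 dq_le[OF \<open>q' < q\<close>]])
    also have "\<dots> < al q" using q by (simp add: al_def)
    finally show ?thesis by simp
  qed
qed

lemma Eset_eq: "Eset d = al ` {2..} \<union> be ` {2..}"
proof -
  have P: "{p. 0 < p \<and> d dvd p \<and> d \<noteq> p} = (\<lambda>q. d * q) ` {2..}"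
  proof (intro equalityI subsetI)
    fix p assume "p \<in> {p. 0 < p \<and> d dvd p \<and> d \<noteq> p}"
    then obtain q where p: "p = d * q" "0 < p" "d \<noteq> p" by (auto elim: dvdE)
    then have "q \<noteq> 0" "q \<noteq> 1" by auto
    then have "q \<ge> 2" by simp
    then show "p \<in> (\<lambda>q. d * q) ` {2..}" using p by auto
  next
    fix p assume "p \<in> (\<lambda>q. d * q) ` {2..}"
    then obtain q where "q \<ge> 2" "p = d * q" by auto
    then show "p \<in> {p. 0 < p \<and> d dvd p \<and> d \<noteq> p}" using d0 by auto
  qed
  have dv: "int (d * q) div int d = int q" for q using d0 by simp
  have "Eset d = (\<Union>q\<in>{2..}. {al q, be q})"
    unfolding Eset_def P using d0 by (simp add: dv al_def be_def)
  also have "\<dots> = al ` {2..} \<union> be ` {2..}" by blast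
  finally show ?thesis .
qed

lemma card_E: "card (Eset d \<inter> {1..int k}) = card {q. 2 \<le> q \<and> al q \<le> int k} + card {q. 2 \<le> q \<and> be q \<le> int k}"
proof -
  let ?A = "{q. 2 \<le> q \<and> al q \<le> int k}" and ?B = "{q. 2 \<le> q \<and> be q \<le> int k}"
  have al1: "q \<ge> 2 \<Longrightarrow> al q \<ge> 1" for q using al_ge[of q] by simp
  have be1: "q \<ge> 2 \<Longrightarrow> be q \<ge> 1" for q using be_ge[of q] kappa_nonneg[OF d0, of "d * q - 1"] by simp
  have eq: "Eset d \<inter> {1..int k} = al ` ?A \<union> be ` ?B"
    unfolding Eset_eq using al1 be1 by auto
  have finA: "finite ?A"
  proof (rule finite_subset)
    show "?A \<subseteq> {..nat (int k)}"
    proof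
      fix q assume "q \<in> ?A"
      then show "q \<in> {..nat (int k)}" using al_ge[of q] by auto
    qed
  qed simp
  have finB: "finite ?B"
  proof (rule finite_subset)
    show "?B \<subseteq> {..nat (int k)}"
    proof
      fix q assume q: "q \<in> ?B"
      then have "be q \<ge> 3 * int q" using be_ge[of q] kappa_nonneg[OF d0, of "d * q - 1"] by simp
      then show "q \<in> {..nat (int k)}" using q by auto
    qed
  qed simp
  have injA: "inj_on al ?A"
  proof (rule inj_onI)
    fix x y assume "al x = al y"
    then show "x = y" using al_mono[of x y] al_mono[of y x] by (cases x y rule: linorder_cases) auto
  qed
  have injB: "inj_on be ?B"
  proof (rule inj_onI)
    fix x y assume "be x = be y"
    then show "x = y" using be_mono[of x y] be_mono[of y x] by (cases x y rule: linorder_cases) auto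
  qed
  have disj: "al ` ?A \<inter> be ` ?B = {}" using al_be_disj by fastforce
  have "card (al ` ?A \<union> be ` ?B) = card (al ` ?A) + card (be ` ?B)"
    by (rule card_Un_disjoint) (use finA finB disj in auto)
  then show ?thesis unfolding eq using card_image[OF injA] card_image[OF injB] by simp
qed

definition "cc = Aconst d / zt_d d / (2 * real d)"

lemma kap_comp:
  assumes "strict_mono f"
  shows "(\<lambda>q. real_of_int (kappa d (f q)) / real (f q) ^ Suc d) \<longlonglongrightarrow> cc"
  using filterlim_compose[OF kappa_limit[OF d3] filterlim_subseq[OF assms]] unfolding cc_def comp_def .

lemma q_over: "(\<lambda>q. real q / real q ^ Suc d) \<longlonglongrightarrow> 0"
proof -
  have L: "(\<lambda>q. (1 / real q) ^ d) \<longlonglongrightarrow> 0 ^ d"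
    by (intro tendsto_power lim_inverse_n'[unfolded inverse_eq_divide])
  have z: "(0::real) ^ d = 0" using d0 by simp
  have E: "eventually (\<lambda>q. (1 / real q) ^ d = real q / real q ^ Suc d) sequentially"
    using eventually_gt_at_top[of 0] by eventually_elim (simp add: power_divide)
  show ?thesis by (rule Lim_transform_eventually[OF L[unfolded z] E])
qed

lemma be_lim: "(\<lambda>q. real_of_int (be q) / real q ^ Suc d) \<longlonglongrightarrow> cc * real d ^ Suc d"
proof -
  have sm: "strict_mono (\<lambda>q. d * q)" using d0 by (simp add: strict_mono_def)
  have "(\<lambda>q. real_of_int (kappa d (d * q)) / real (d * q) ^ Suc d * real d ^ Suc d - real q / real q ^ Suc d)
     \<longlonglongrightarrow> cc * real d ^ Suc d - 0"
    by (intro tendsto_diff tendsto_mult tendsto_const q_over kap_comp[OF sm])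
  moreover have "eventually (\<lambda>q. real_of_int (kappa d (d * q)) / real (d * q) ^ Suc d * real d ^ Suc d - real q / real q ^ Suc d
     = real_of_int (be q) / real q ^ Suc d) sequentially"
    using eventually_gt_at_top[of 0]
  proof eventually_elim
    case (elim q)
    have "real_of_int (kappa d (d * q)) / real (d * q) ^ Suc d * real d ^ Suc d = real_of_int (kappa d (d * q)) / real q ^ Suc d"
      using elim d0 by (simp add: power_mult_distrib)
    then show ?case by (simp add: be_def diff_divide_distrib)
  qed
  ultimately show ?thesis by (simp add: Lim_transform_eventually)
qed

lemma al_lim: "(\<lambda>q. real_of_int (al q) / real q ^ Suc d) \<longlonglongrightarrow> cc * real d ^ Suc d"
proof -
  have sm: "strict_mono (\<lambda>q. d * q - 1)"
    unfolding strict_mono_Suc_iff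
  proof
    fix n show "d * n - 1 < d * Suc n - 1" using d3 by (cases n) auto
  qed
  have r: "(\<lambda>q. real (d * q - 1) / real q) \<longlonglongrightarrow> real d"
  proof -
    have "(\<lambda>q. real d - 1 / real q) \<longlonglongrightarrow> real d - 0"
      by (intro tendsto_diff tendsto_const lim_inverse_n'[unfolded inverse_eq_divide])
    moreover have "eventually (\<lambda>q. real d - 1 / real q = real (d * q - 1) / real q) sequentially"
      using eventually_gt_at_top[of 0]
    proof eventually_elim
      case (elim q)
      have "d * q \<ge> 1" using elim d0 by simp
      then have "real (d * q - 1) = real d * real q - 1" by (simp add: of_nat_diff)
      then show ?case using elim by (simp add: field_simps)
    qed
    ultimately show ?thesis by (simp add: Lim_transform_eventually)
  qed
  have "(\<lambda>q. real_of_int (kappa d (d * q - 1)) / real (d * q - 1) ^ Suc d * (real (d * q - 1) / real q) ^ Suc d + real q / real q ^ Suc d)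
     \<longlonglongrightarrow> cc * real d ^ Suc d + 0"
    by (intro tendsto_add tendsto_mult tendsto_power r q_over kap_comp[OF sm])
  moreover have "eventually (\<lambda>q. real_of_int (kappa d (d * q - 1)) / real (d * q - 1) ^ Suc d * (real (d * q - 1) / real q) ^ Suc d + real q / real q ^ Suc d
     = real_of_int (al q) / real q ^ Suc d) sequentially"
    using eventually_gt_at_top[of 1]
  proof eventually_elim
    case (elim q)
    have "1 * 2 \<le> d * q" by (rule mult_le_mono) (use d0 elim in auto)
    then have "d * q \<ge> 2" by simp
    then have nz: "real (d * q - 1) \<noteq> 0" by simp
    have "real_of_int (kappa d (d * q - 1)) / real (d * q - 1) ^ Suc d * (real (d * q - 1) / real q) ^ Suc d
        = real_of_int (kappa d (d * q - 1)) / real q ^ Suc d"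
      using nz by (simp add: power_divide)
    then show ?case by (simp add: al_def add_divide_distrib)
  qed
  ultimately show ?thesis by (simp add: Lim_transform_eventually)
qed

end



lemma Aconst_eq: "Aconst d = 2 ^ d * real d / fact (Suc d)"
proof -
  have f: "(fact (Suc d)::real) = (real d + 1) * fact d" by simp
  have p: "(fact d::real) > 0" by simp
  show ?thesis unfolding Aconst_def f using p
    by (simp add: divide_simps) (simp add: algebra_simps)
qed

lemma zt_pos: "d \<ge> 2 \<Longrightarrow> zt_d d > 0"
proof -
  assume "d \<ge> 2"
  then have s: "summable (\<lambda>n. 1 / real (Suc n) ^ d)" by (rule summ_d)
  have "(\<Sum>n<1. 1 / real (Suc n) ^ d) \<le> zt_d d"
    unfolding zt_d_def by (rule sum_le_suminf[OF s]) auto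
  then show ?thesis by simp
qed

lemma final_const:
  assumes d3: "d \<ge> 3"
  shows "2 * (1 / (cc d * real d ^ Suc d) powr (1 / real (Suc d)))
       = (4 * fact (Suc d) * zt_d d) powr (1 / real (Suc d)) / real d"
proof -
  let ?e = "1 / real (Suc d)" and ?z = "zt_d d" and ?F = "fact (Suc d) :: real"
  have d0: "real d > 0" using d3 by simp
  have z0: "?z > 0" using d3 by (intro zt_pos) simp
  have F0: "?F > 0" by simp
  have cc_eq: "cc d = 2 ^ d / (2 * ?F * ?z)"
    unfolding cc_def[OF d3] Aconst_eq using d0 z0 F0 by (simp add: divide_simps)
  have c0: "cc d > 0" unfolding cc_eq using z0 by simp
  have X0: "cc d * real d ^ Suc d > 0" using c0 d0 by simp
  have two: "(2::real) = (2 ^ Suc d) powr ?e" by (rule A1[symmetric]) auto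
  have dd: "real d = (real d ^ Suc d) powr ?e" by (rule A1[symmetric]) (use d0 in auto)
  have "2 * (1 / (cc d * real d ^ Suc d) powr ?e) = (2 ^ Suc d) powr ?e / (cc d * real d ^ Suc d) powr ?e"
    by (subst two) simp
  also have "\<dots> = (2 ^ Suc d / (cc d * real d ^ Suc d)) powr ?e"
    using X0 by (simp add: powr_divide)
  also have "2 ^ Suc d / (cc d * real d ^ Suc d) = 4 * ?F * ?z / real d ^ Suc d"
    unfolding cc_eq using d0 z0 F0 by (simp add: field_simps)
  also have "(4 * ?F * ?z / real d ^ Suc d) powr ?e = (4 * ?F * ?z) powr ?e / (real d ^ Suc d) powr ?e"
    using d0 z0 F0 by (simp add: powr_divide)
  also have "\<dots> = (4 * ?F * ?z) powr ?e / real d" using dd by simp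
  finally show ?thesis .
qed

theorem lemma4p4:
  fixes d :: nat
  assumes "d > 2"
  shows "(\<lambda>k::nat. real (card (Eset d \<inter> {1..int k})) / real k powr (1 / real (d + 1)))
           \<longlonglongrightarrow> (4 * fact (d + 1) * zeta_nat d) powr (1 / real (d + 1)) / real d"
proof -
  have d3: "d \<ge> 3" using assms by simp
  have d0: "real d > 0" using d3 by simp
  have z0: "zt_d d > 0" using d3 by (intro zt_pos) simp
  have c0: "cc d > 0" unfolding cc_def[OF d3] Aconst_eq using d0 z0 by simp
  have X0: "cc d * real d ^ Suc d > 0" using c0 d0 by simp
  have A: "(\<lambda>k. real (card {q. 2 \<le> q \<and> al d q \<le> int k}) / real k powr (1 / real (Suc d)))
      \<longlonglongrightarrow> 1 / (cc d * real d ^ Suc d) powr (1 / real (Suc d))"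
    by (rule count_asym[OF _ al_lim[OF d3] X0]) (auto intro: al_mono[OF d3])
  have B: "(\<lambda>k. real (card {q. 2 \<le> q \<and> be d q \<le> int k}) / real k powr (1 / real (Suc d)))
      \<longlonglongrightarrow> 1 / (cc d * real d ^ Suc d) powr (1 / real (Suc d))"
    by (rule count_asym[OF _ be_lim[OF d3] X0]) (auto intro: be_mono[OF d3])
  have "(\<lambda>k. real (card {q. 2 \<le> q \<and> al d q \<le> int k}) / real k powr (1 / real (Suc d))
          + real (card {q. 2 \<le> q \<and> be d q \<le> int k}) / real k powr (1 / real (Suc d)))
      \<longlonglongrightarrow> 1 / (cc d * real d ^ Suc d) powr (1 / real (Suc d)) + 1 / (cc d * real d ^ Suc d) powr (1 / real (Suc d))"
    by (rule tendsto_add[OF A B])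
  moreover have "real (card {q. 2 \<le> q \<and> al d q \<le> int k}) / real k powr (1 / real (Suc d))
          + real (card {q. 2 \<le> q \<and> be d q \<le> int k}) / real k powr (1 / real (Suc d))
        = real (card (Eset d \<inter> {1..int k})) / real k powr (1 / real (d + 1))" for k
    unfolding card_E[OF d3] by (simp add: add_divide_distrib)
  moreover have "1 / (cc d * real d ^ Suc d) powr (1 / real (Suc d)) + 1 / (cc d * real d ^ Suc d) powr (1 / real (Suc d))
      = (4 * fact (d + 1) * zeta_nat d) powr (1 / real (d + 1)) / real d"
    using final_const[OF d3] by (simp add: zt_d_def zeta_nat_def)
  ultimately show ?thesis by simp
qed


end
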